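(* There is a constant $C$ such that the following holds. Let $k_1,k_2,k_3\in\mathbb{Z}$, $j_1,j_2,j_3\in\mathbb{Z}_+$, and let $f_{k_i,j_i}\in L^2(\mathbb{R}\times\mathbb{R})$ be supported in $I_{k_i}\times\widetilde I_{j_i}$, $i=1,2,3$. Then: (a) $|J(f_{k_1,j_1},f_{k_2,j_2},f_{k_3,j_3})|\leq C2^{\min(k_1,k_2,k_3)/2}2^{\min(j_1,j_2,j_3)/2}\prod_{i=1}^3\|f_{k_i,j_i}\|_{L^2}$. (b) If $\max(k_1,k_2,k_3)\geq\min(k_1,k_2,k_3)+5$ and $i\in\{1,2,3\}$, then $|J(f_{k_1,j_1},f_{k_2,j_2},f_{k_3,j_3})|\leq C2^{(j_1+j_2+j_3)/2}2^{-(j_i+k_i)/2}\prod_{l=1}^3\|f_{k_l,j_l}\|_{L^2}$. (c) $|J(f_{k_1,j_1},f_{k_2,j_2},f_{k_3,j_3})|\leq C2^{\min(j_1,j_2,j_3)/2+\mathrm{med}(j_1,j_2,j_3)/4}\prod_{i=1}^3\|f_{k_i,j_i}\|_{L^2}$.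
   Context: $\omega(\xi)=-\xi|\xi|$ and $\Omega(\xi_1,\xi_2)=-\omega(\xi_1+\xi_2)+\omega(\xi_1)+\omega(\xi_2)$. For compactly supported $f,g,h\in L^2(\mathbb{R}^2)$, $J(f,g,h)=\int_{\mathbb{R}^4}f(\xi_1,\mu_1)g(\xi_2,\mu_2)h(\xi_1+\xi_2,\mu_1+\mu_2+\Omega(\xi_1,\xi_2))\,d\xi_1d\xi_2d\mu_1d\mu_2$. For $l\in\mathbb{Z}$, $I_l=\{\xi:|\xi|\in[2^{l-1},2^{l+1}]\}$; for $l\in\mathbb{Z}_+$, $\widetilde I_0=[-2,2]$ and $\widetilde I_l=I_l$ for $l\ge1$. $\mathrm{med}(\alpha_1,\alpha_2,\alpha_3)=\alpha_1+\alpha_2+\alpha_3-\max-\min$. *)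

theory Defs
  imports "HOL-Analysis.Analysis"
begin

definition omega :: "real \<Rightarrow> real" where
  "omega \<xi> = - \<xi> * \<bar>\<xi>\<bar>"

definition Omega :: "real \<Rightarrow> real \<Rightarrow> real" where
  "Omega \<xi>1 \<xi>2 = - omega (\<xi>1 + \<xi>2) + omega \<xi>1 + omega \<xi>2"

definition Idy :: "int \<Rightarrow> real set" where
  "Idy l = {\<xi>. \<bar>\<xi>\<bar> \<in> {2 powr (real_of_int l - 1) .. 2 powr (real_of_int l + 1)}}"

definition Itil :: "nat \<Rightarrow> real set" where
  "Itil l = (if l = 0 then {-2..2} else Idy (int l))"

definition med :: "real \<Rightarrow> real \<Rightarrow> real \<Rightarrow> real" where
  "med a b c = a + b + c - max a (max b c) - min a (min b c)"

definition L2 :: "(real \<times> real \<Rightarrow> complex) \<Rightarrow> bool" where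
  "L2 f \<longleftrightarrow> f \<in> borel_measurable lborel \<and> integrable lborel (\<lambda>x. (norm (f x))\<^sup>2)"

definition L2norm :: "(real \<times> real \<Rightarrow> complex) \<Rightarrow> real" where
  "L2norm f = sqrt (\<integral>x. (norm (f x))\<^sup>2 \<partial>lborel)"

definition J :: "(real \<times> real \<Rightarrow> complex) \<Rightarrow> (real \<times> real \<Rightarrow> complex) \<Rightarrow> (real \<times> real \<Rightarrow> complex) \<Rightarrow> complex" where
  "J f g h = (\<integral>x. (case x of ((\<xi>1, \<mu>1), (\<xi>2, \<mu>2)) \<Rightarrow>
      f (\<xi>1, \<mu>1) * g (\<xi>2, \<mu>2) * h (\<xi>1 + \<xi>2, \<mu>1 + \<mu>2 + Omega \<xi>1 \<xi>2)) \<partial>(lborel :: ((real \<times> real) \<times> (real \<times> real)) measure))"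

end

theory Submission
  imports Defs
begin


lemma trans1:
  fixes f :: "real \<Rightarrow> ennreal"
  assumes [measurable]: "f \<in> borel_measurable borel"
  shows "(\<integral>\<^sup>+x. f (x + c) \<partial>lborel) = (\<integral>\<^sup>+x. f x \<partial>lborel)"
  using nn_integral_real_affine[of f 1 c] by (simp add: add.commute)

lemma refl1:
  fixes f :: "real \<Rightarrow> ennreal"
  assumes [measurable]: "f \<in> borel_measurable borel"
  shows "(\<integral>\<^sup>+x. f (c - x) \<partial>lborel) = (\<integral>\<^sup>+x. f x \<partial>lborel)"
  using nn_integral_real_affine[of f "-1" c] by simp

lemma lborel2_iter:
  fixes G :: "real \<times> real \<Rightarrow> ennreal"
  assumes "G \<in> borel_measurable borel"
  shows "(\<integral>\<^sup>+r. G r \<partial>lborel) = (\<integral>\<^sup>+x. \<integral>\<^sup>+y. G (x,y) \<partial>lborel \<partial>lborel)"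
proof -
  have "(\<integral>\<^sup>+r. G r \<partial>lborel) = (\<integral>\<^sup>+r. G r \<partial>(lborel \<Otimes>\<^sub>M lborel))"
    by (simp add: lborel_prod)
  also have "\<dots> = (\<integral>\<^sup>+x. \<integral>\<^sup>+y. G (x,y) \<partial>lborel \<partial>lborel)"
    by (rule lborel.nn_integral_fst[symmetric]) (use assms in \<open>simp add: lborel_prod\<close>)
  finally show ?thesis .
qed

lemma Omega_meas[measurable]:
  assumes [measurable]: "f \<in> borel_measurable M" "g \<in> borel_measurable M"
  shows "(\<lambda>x. Omega (f x) (g x)) \<in> borel_measurable M"
  unfolding Omega_def omega_def by measurable

lemma test1:
  fixes F :: "real \<times> real \<Rightarrow> ennreal"
  assumes [measurable]: "F \<in> borel_measurable (lborel \<Otimes>\<^sub>M lborel)"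
  shows "(\<lambda>(p,q). F (fst p + fst q, snd q + Omega (fst p) (fst q))) \<in> borel_measurable ((lborel \<Otimes>\<^sub>M lborel) \<Otimes>\<^sub>M (lborel \<Otimes>\<^sub>M lborel))"
  by measurable



abbreviation L2M :: "(real \<times> real) measure" where "L2M \<equiv> lborel \<Otimes>\<^sub>M lborel"

lemma L2M_sets[measurable_cong]: "sets L2M = sets (borel \<Otimes>\<^sub>M borel)"
  by (intro sets_pair_measure_cong) simp_all

lemma space_bb[simp]: "space (borel \<Otimes>\<^sub>M borel) = (UNIV :: (real \<times> real) set)"
  by (simp add: space_pair_measure)

lemma space_L2M[simp]: "space L2M = UNIV"
  by (simp add: space_pair_measure)

interpretation L2I: sigma_finite_measure L2M
  by (simp add: lborel_prod sigma_finite_lborel)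

interpretation L22: pair_sigma_finite L2M L2M
  by unfold_locales

definition Sm :: "real \<times> real \<Rightarrow> real \<times> real \<Rightarrow> real \<times> real" where
  "Sm p q = (fst p + fst q, snd p + snd q + Omega (fst p) (fst q))"

definition Si :: "real \<times> real \<Rightarrow> real \<times> real \<Rightarrow> real \<times> real" where
  "Si p r = (fst r - fst p, snd r - snd p - Omega (fst p) (fst r - fst p))"

lemma Sm_Si[simp]: "Sm p (Si p r) = r" by (simp add: Sm_def Si_def)
lemma Si_Sm[simp]: "Si p (Sm p q) = q" by (simp add: Sm_def Si_def)

lemma Sm_meas[measurable]:
  assumes [measurable]: "f \<in> M \<rightarrow>\<^sub>M borel \<Otimes>\<^sub>M borel" "g \<in> M \<rightarrow>\<^sub>M borel \<Otimes>\<^sub>M borel"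
  shows "(\<lambda>x. Sm (f x) (g x)) \<in> M \<rightarrow>\<^sub>M borel \<Otimes>\<^sub>M borel"
  unfolding Sm_def by measurable

lemma Si_meas[measurable]:
  assumes [measurable]: "f \<in> M \<rightarrow>\<^sub>M borel \<Otimes>\<^sub>M borel" "g \<in> M \<rightarrow>\<^sub>M borel \<Otimes>\<^sub>M borel"
  shows "(\<lambda>x. Si (f x) (g x)) \<in> M \<rightarrow>\<^sub>M borel \<Otimes>\<^sub>M borel"
  unfolding Si_def by measurable

lemma Sm_meas1[measurable]:
  assumes [measurable]: "g \<in> M \<rightarrow>\<^sub>M borel \<Otimes>\<^sub>M borel"
  shows "(\<lambda>x. Sm p (g x)) \<in> M \<rightarrow>\<^sub>M borel \<Otimes>\<^sub>M borel"
  unfolding Sm_def by measurable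

lemma Si_meas1[measurable]:
  assumes [measurable]: "g \<in> M \<rightarrow>\<^sub>M borel \<Otimes>\<^sub>M borel"
  shows "(\<lambda>x. Si p (g x)) \<in> M \<rightarrow>\<^sub>M borel \<Otimes>\<^sub>M borel"
  unfolding Si_def by measurable

lemma Si_meas2[measurable]:
  assumes [measurable]: "g \<in> M \<rightarrow>\<^sub>M borel \<Otimes>\<^sub>M borel"
  shows "(\<lambda>x. Si (g x) r) \<in> M \<rightarrow>\<^sub>M borel \<Otimes>\<^sub>M borel"
  unfolding Si_def by measurable

lemma test2:
  fixes F :: "real \<times> real \<Rightarrow> ennreal"
  assumes [measurable]: "F \<in> borel_measurable L2M"
  shows "(\<lambda>(p,q). F (Sm p q) * F (Si q p)) \<in> borel_measurable (L2M \<Otimes>\<^sub>M L2M)"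
  by measurable

lemma iter2:
  fixes G :: "real \<times> real \<Rightarrow> ennreal"
  assumes "G \<in> borel_measurable L2M"
  shows "(\<integral>\<^sup>+r. G r \<partial>L2M) = (\<integral>\<^sup>+x. \<integral>\<^sup>+y. G (x,y) \<partial>lborel \<partial>lborel)"
  by (rule lborel.nn_integral_fst[symmetric]) (use assms in simp)

lemma MP:
  fixes H :: "real \<times> real \<Rightarrow> ennreal"
  assumes [measurable]: "H \<in> borel_measurable L2M"
  shows "(\<integral>\<^sup>+r. H (Si p r) \<partial>L2M) = (\<integral>\<^sup>+r. H r \<partial>L2M)"
proof -
  have "(\<integral>\<^sup>+r. H (Si p r) \<partial>L2M) = (\<integral>\<^sup>+x. \<integral>\<^sup>+y. H (Si p (x,y)) \<partial>lborel \<partial>lborel)"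
    by (rule iter2) (simp add: Si_def)
  also have "\<dots> = (\<integral>\<^sup>+x. \<integral>\<^sup>+y. H (x - fst p, y) \<partial>lborel \<partial>lborel)"
  proof (rule nn_integral_cong)
    fix x
    have "(\<integral>\<^sup>+y. H (x - fst p, y + (- snd p - Omega (fst p) (x - fst p))) \<partial>lborel) = (\<integral>\<^sup>+y. H (x - fst p, y) \<partial>lborel)"
      by (rule trans1) measurable
    then show "(\<integral>\<^sup>+y. H (Si p (x,y)) \<partial>lborel) = (\<integral>\<^sup>+y. H (x - fst p, y) \<partial>lborel)"
      by (simp add: Si_def algebra_simps)
  qed
  also have "\<dots> = (\<integral>\<^sup>+x. \<integral>\<^sup>+y. H (x, y) \<partial>lborel \<partial>lborel)"
    using trans1[of "\<lambda>x. \<integral>\<^sup>+y. H (x, y) \<partial>lborel" "- fst p"] by simp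
  also have "\<dots> = (\<integral>\<^sup>+r. H r \<partial>L2M)"
    by (rule iter2[symmetric]) measurable
  finally show ?thesis .
qed

lemma refl2:
  fixes H :: "real \<times> real \<Rightarrow> ennreal"
  assumes [measurable]: "H \<in> borel_measurable L2M"
  shows "(\<integral>\<^sup>+r. H (- fst r, - snd r) \<partial>L2M) = (\<integral>\<^sup>+r. H r \<partial>L2M)"
proof -
  have "(\<integral>\<^sup>+r. H (- fst r, - snd r) \<partial>L2M) = (\<integral>\<^sup>+x. \<integral>\<^sup>+y. H (- x, 0 - y) \<partial>lborel \<partial>lborel)"
  proof -
    have "(\<lambda>r. H (- fst r, - snd r)) \<in> borel_measurable L2M" by measurable
    then show ?thesis by (subst iter2) auto
  qed
  also have "\<dots> = (\<integral>\<^sup>+x. \<integral>\<^sup>+y. H (0 - x, y) \<partial>lborel \<partial>lborel)"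
  proof (rule nn_integral_cong)
    fix x :: real
    show "(\<integral>\<^sup>+y. H (- x, 0 - y) \<partial>lborel) = (\<integral>\<^sup>+y. H (0 - x, y) \<partial>lborel)"
      using refl1[of "\<lambda>y. H (-x, y)" 0] by simp
  qed
  also have "\<dots> = (\<integral>\<^sup>+x. \<integral>\<^sup>+y. H (x, y) \<partial>lborel \<partial>lborel)"
    by (rule refl1[of "\<lambda>x. \<integral>\<^sup>+y. H (x, y) \<partial>lborel"]) measurable
  also have "\<dots> = (\<integral>\<^sup>+r. H r \<partial>L2M)"
    by (rule iter2[symmetric]) measurable
  finally show ?thesis .
qed

lemma swap2:
  fixes G :: "real \<times> real \<Rightarrow> real \<times> real \<Rightarrow> ennreal"
  assumes "case_prod G \<in> borel_measurable (L2M \<Otimes>\<^sub>M L2M)"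
  shows "(\<integral>\<^sup>+p. \<integral>\<^sup>+q. G p q \<partial>L2M \<partial>L2M) = (\<integral>\<^sup>+q. \<integral>\<^sup>+p. G p q \<partial>L2M \<partial>L2M)"
  using L22.Fubini'[OF assms] by simp


definition Ient :: "(real \<times> real \<Rightarrow> ennreal) \<Rightarrow> (real \<times> real \<Rightarrow> ennreal) \<Rightarrow> (real \<times> real \<Rightarrow> ennreal) \<Rightarrow> ennreal" where
  "Ient F1 F2 F3 = (\<integral>\<^sup>+p. \<integral>\<^sup>+q. F1 p * F2 q * F3 (Sm p q) \<partial>L2M \<partial>L2M)"

definition NN :: "(real \<times> real \<Rightarrow> ennreal) \<Rightarrow> ennreal" where
  "NN F = (\<integral>\<^sup>+p. F p ^ 2 \<partial>L2M)"

definition RR :: "(real \<times> real \<Rightarrow> ennreal) \<Rightarrow> (real \<times> real \<Rightarrow> ennreal)" where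
  "RR F = (\<lambda>r. F (- fst r, - snd r))"

lemma RR_meas[measurable]: 
  assumes [measurable]: "F \<in> borel_measurable L2M" shows "RR F \<in> borel_measurable L2M"
  unfolding RR_def by measurable

lemma NN_RR: "F \<in> borel_measurable L2M \<Longrightarrow> NN (RR F) = NN F"
  unfolding NN_def RR_def using refl2[of "\<lambda>r. F r ^ 2"] by simp

lemma Omega_sym: "Omega a b = Omega b a"
  by (simp add: Omega_def add.commute)

lemma Sm_sym: "Sm p q = Sm q p"
  by (simp add: Sm_def Omega_sym add.commute)

lemma Sym1:
  assumes [measurable]: "F1 \<in> borel_measurable L2M" "F2 \<in> borel_measurable L2M" "F3 \<in> borel_measurable L2M"
  shows "Ient F1 F2 F3 = Ient F2 F1 F3"
proof -
  have "Ient F1 F2 F3 = (\<integral>\<^sup>+q. \<integral>\<^sup>+p. F1 p * F2 q * F3 (Sm p q) \<partial>L2M \<partial>L2M)"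
    unfolding Ient_def by (rule swap2) measurable
  also have "\<dots> = Ient F2 F1 F3"
    unfolding Ient_def by (intro nn_integral_cong) (simp add: Sm_sym mult.commute mult.left_commute)
  finally show ?thesis .
qed

lemma Omega_refl: "Omega a (- b - a) = Omega a b"
  by (simp add: Omega_def omega_def algebra_simps abs_minus_commute)

lemma Si_neg: "Si p (- fst r, - snd r) = (- fst (Sm p r), - snd (Sm p r))"
proof -
  have "Omega (fst p) (- fst r - fst p) = Omega (fst p) (fst r)" by (rule Omega_refl)
  then show ?thesis by (simp add: Si_def Sm_def algebra_simps)
qed

lemma Sym2:
  assumes [measurable]: "F1 \<in> borel_measurable L2M" "F2 \<in> borel_measurable L2M" "F3 \<in> borel_measurable L2M"
  shows "Ient F1 F2 F3 = Ient F1 (RR F3) (RR F2)"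
  unfolding Ient_def
proof (rule nn_integral_cong)
  fix p
  have "(\<integral>\<^sup>+q. F2 q * F3 (Sm p q) \<partial>L2M) = (\<integral>\<^sup>+r. F2 (Si p r) * F3 (Sm p (Si p r)) \<partial>L2M)"
    by (rule MP[symmetric, of "\<lambda>q. F2 q * F3 (Sm p q)"]) measurable
  also have "\<dots> = (\<integral>\<^sup>+r. F2 (Si p r) * F3 r \<partial>L2M)" by simp
  also have "\<dots> = (\<integral>\<^sup>+r. F2 (Si p (- fst r, - snd r)) * F3 (- fst r, - snd r) \<partial>L2M)"
    by (rule refl2[symmetric, of "\<lambda>r. F2 (Si p r) * F3 r"]) measurable
  also have "\<dots> = (\<integral>\<^sup>+q. RR F3 q * RR F2 (Sm p q) \<partial>L2M)"
    by (simp add: Si_neg RR_def mult.commute)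
  finally have *: "(\<integral>\<^sup>+q. F2 q * F3 (Sm p q) \<partial>L2M) = (\<integral>\<^sup>+q. RR F3 q * RR F2 (Sm p q) \<partial>L2M)" .
  have "(\<integral>\<^sup>+q. F1 p * F2 q * F3 (Sm p q) \<partial>L2M) = F1 p * (\<integral>\<^sup>+q. F2 q * F3 (Sm p q) \<partial>L2M)"
    by (subst nn_integral_cmult[symmetric]) (measurable, simp add: mult.assoc)
  also have "\<dots> = (\<integral>\<^sup>+q. F1 p * RR F3 q * RR F2 (Sm p q) \<partial>L2M)"
    by (subst *, subst nn_integral_cmult[symmetric]) (measurable, simp add: mult.assoc)
  finally show "(\<integral>\<^sup>+q. F1 p * F2 q * F3 (Sm p q) \<partial>L2M) = (\<integral>\<^sup>+q. F1 p * RR F3 q * RR F2 (Sm p q) \<partial>L2M)" .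
qed


lemma FL:
  fixes F1 F2 F3 :: "real \<times> real \<Rightarrow> ennreal"
  assumes [measurable]: "F1 \<in> borel_measurable L2M" "F2 \<in> borel_measurable L2M" "F3 \<in> borel_measurable L2M"
    and [measurable]: "S1 \<in> sets L2M" "S2 \<in> sets L2M" "S3 \<in> sets L2M"
    and s1: "\<And>r. r \<notin> S1 \<Longrightarrow> F1 r = 0"
    and s2: "\<And>r. r \<notin> S2 \<Longrightarrow> F2 r = 0"
    and s3: "\<And>r. r \<notin> S3 \<Longrightarrow> F3 r = 0"
    and fib: "\<And>r. r \<in> S3 \<Longrightarrow> emeasure L2M {p. p \<in> S1 \<and> Si p r \<in> S2} \<le> M"
  shows "(Ient F1 F2 F3)^2 \<le> M * NN F1 * NN F2 * NN F3"
proof -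
  define W where "W r = (\<integral>\<^sup>+p. F1 p * F2 (Si p r) \<partial>L2M)" for r
  define V where "V r = (\<integral>\<^sup>+p. F1 p ^ 2 * F2 (Si p r) ^ 2 \<partial>L2M)" for r
  have Wm[measurable]: "W \<in> borel_measurable L2M" unfolding W_def by measurable
  have Vm[measurable]: "V \<in> borel_measurable L2M" unfolding V_def by measurable
  have "Ient F1 F2 F3 = (\<integral>\<^sup>+p. \<integral>\<^sup>+r. F1 p * F2 (Si p r) * F3 r \<partial>L2M \<partial>L2M)"
    unfolding Ient_def
  proof (rule nn_integral_cong)
    fix p
    show "(\<integral>\<^sup>+q. F1 p * F2 q * F3 (Sm p q) \<partial>L2M) = (\<integral>\<^sup>+r. F1 p * F2 (Si p r) * F3 r \<partial>L2M)"
      using MP[of "\<lambda>q. F1 p * F2 q * F3 (Sm p q)" p] by simp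
  qed
  also have "\<dots> = (\<integral>\<^sup>+r. \<integral>\<^sup>+p. F1 p * F2 (Si p r) * F3 r \<partial>L2M \<partial>L2M)"
    by (rule swap2) measurable
  also have "\<dots> = (\<integral>\<^sup>+r. F3 r * (indicator S3 r * W r) \<partial>L2M)"
  proof (rule nn_integral_cong)
    fix r
    have "(\<integral>\<^sup>+p. F1 p * F2 (Si p r) * F3 r \<partial>L2M) = F3 r * W r"
      unfolding W_def by (subst nn_integral_cmult[symmetric]) (measurable, simp add: mult.commute mult.left_commute)
    also have "\<dots> = F3 r * (indicator S3 r * W r)"
      using s3[of r] by (cases "r \<in> S3") auto
    finally show "(\<integral>\<^sup>+p. F1 p * F2 (Si p r) * F3 r \<partial>L2M) = F3 r * (indicator S3 r * W r)" .
  qed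
  finally have I1: "Ient F1 F2 F3 = (\<integral>\<^sup>+r. F3 r * (indicator S3 r * W r) \<partial>L2M)" .
  have CS1: "(Ient F1 F2 F3)^2 \<le> NN F3 * (\<integral>\<^sup>+r. (indicator S3 r * W r)^2 \<partial>L2M)"
    unfolding I1 NN_def by (rule Cauchy_Schwarz_nn_integral) measurable
  have pw: "(indicator S3 r * W r)^2 \<le> M * V r" for r
  proof (cases "r \<in> S3")
    case False then show ?thesis by simp
  next
    case True
    define A where "A = {p. p \<in> S1 \<and> Si p r \<in> S2}"
    have Am[measurable]: "A \<in> sets L2M"
    proof -
      have "A = {p \<in> space L2M. p \<in> S1 \<and> Si p r \<in> S2}" unfolding A_def by simp
      also have "\<dots> \<in> sets L2M" by measurable
      finally show ?thesis .
    qed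
    have "W r = (\<integral>\<^sup>+p. indicator A p * (F1 p * F2 (Si p r)) \<partial>L2M)"
      unfolding W_def
    proof (rule nn_integral_cong)
      fix p
      show "F1 p * F2 (Si p r) = indicator A p * (F1 p * F2 (Si p r))"
        using s1[of p] s2[of "Si p r"] by (cases "p \<in> A") (auto simp: A_def)
    qed
    then have "(W r)^2 \<le> (\<integral>\<^sup>+p. (indicator A p)^2 \<partial>L2M) * (\<integral>\<^sup>+p. (F1 p * F2 (Si p r))^2 \<partial>L2M)"
      by (simp only:) (rule Cauchy_Schwarz_nn_integral; measurable)
    also have "(\<integral>\<^sup>+p. (indicator A p)^2 \<partial>L2M) = emeasure L2M A"
    proof -
      have "(\<lambda>p. (indicator A p :: ennreal)^2) = indicator A" by (auto simp: indicator_def fun_eq_iff)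
      then show ?thesis using Am by simp
    qed
    also have "(\<integral>\<^sup>+p. (F1 p * F2 (Si p r))^2 \<partial>L2M) = V r"
      unfolding V_def by (simp add: power_mult_distrib)
    also have "emeasure L2M A * V r \<le> M * V r"
      using fib[OF True] unfolding A_def by (intro mult_right_mono) auto
    finally show ?thesis using True by simp
  qed
  have "(\<integral>\<^sup>+r. V r \<partial>L2M) = (\<integral>\<^sup>+p. \<integral>\<^sup>+r. F1 p ^ 2 * F2 (Si p r) ^ 2 \<partial>L2M \<partial>L2M)"
    unfolding V_def by (rule swap2[symmetric]) measurable
  also have "\<dots> = (\<integral>\<^sup>+p. F1 p ^ 2 * NN F2 \<partial>L2M)"
  proof (rule nn_integral_cong)
    fix p
    have "(\<integral>\<^sup>+r. F1 p ^ 2 * F2 (Si p r) ^ 2 \<partial>L2M) = F1 p ^ 2 * (\<integral>\<^sup>+r. F2 (Si p r) ^ 2 \<partial>L2M)"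
      by (rule nn_integral_cmult) measurable
    also have "(\<integral>\<^sup>+r. F2 (Si p r) ^ 2 \<partial>L2M) = NN F2"
      unfolding NN_def by (rule MP) measurable
    finally show "(\<integral>\<^sup>+r. F1 p ^ 2 * F2 (Si p r) ^ 2 \<partial>L2M) = F1 p ^ 2 * NN F2" .
  qed
  also have "\<dots> = NN F1 * NN F2"
    unfolding NN_def by (rule nn_integral_multc) measurable
  finally have VV: "(\<integral>\<^sup>+r. V r \<partial>L2M) = NN F1 * NN F2" .
  have "(\<integral>\<^sup>+r. (indicator S3 r * W r)^2 \<partial>L2M) \<le> (\<integral>\<^sup>+r. M * V r \<partial>L2M)"
    by (rule nn_integral_mono) (rule pw)
  also have "\<dots> = M * (NN F1 * NN F2)"
    by (subst nn_integral_cmult) (measurable, simp add: VV)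
  finally have "NN F3 * (\<integral>\<^sup>+r. (indicator S3 r * W r)^2 \<partial>L2M) \<le> NN F3 * (M * (NN F1 * NN F2))"
    by (rule mult_left_mono) simp
  with CS1 show ?thesis by (simp add: mult_ac)
qed



lemma emeasure_interval_le:
  fixes a r :: real
  assumes "S \<subseteq> {a - r .. a + r}" "0 \<le> r"
  shows "emeasure lborel S \<le> ennreal (2 * r)"
proof -
  have "emeasure lborel S \<le> emeasure lborel {a - r .. a + r}"
    by (rule emeasure_mono[OF assms(1)]) simp
  also have "\<dots> = ennreal (2 * r)" using assms(2) by simp
  finally show ?thesis .
qed

lemma meas_two_abs:
  fixes a b r s :: real
  assumes "0 \<le> r" "0 \<le> s"
  shows "emeasure lborel {x. \<bar>x - a\<bar> \<le> r \<and> \<bar>x - b\<bar> \<le> s} \<le> ennreal (2 * min r s)"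
proof (cases "r \<le> s")
  case True
  then show ?thesis using assms by (intro emeasure_interval_le[where a=a]) (auto simp: abs_le_iff)
next
  case False
  then show ?thesis using assms by (intro emeasure_interval_le[where a=b]) (auto simp: abs_le_iff)
qed

lemma meas_lin:
  fixes a b w :: real
  assumes "b \<noteq> 0" "0 \<le> w"
  shows "emeasure lborel {x. \<bar>a + b * x\<bar> \<le> w} \<le> ennreal (2 * w / \<bar>b\<bar>)"
proof -
  have "{x. \<bar>a + b * x\<bar> \<le> w} \<subseteq> {(-a/b) - w/\<bar>b\<bar> .. (-a/b) + w/\<bar>b\<bar>}"
  proof
    fix x assume "x \<in> {x. \<bar>a + b * x\<bar> \<le> w}"
    then have "\<bar>b\<bar> * \<bar>x - (-a/b)\<bar> \<le> w"
      using assms by (simp add: abs_mult[symmetric] algebra_simps)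
    then have "\<bar>x - (-a/b)\<bar> \<le> w / \<bar>b\<bar>" using assms by (simp add: field_simps mult.commute)
    then show "x \<in> {(-a/b) - w/\<bar>b\<bar> .. (-a/b) + w/\<bar>b\<bar>}" by (auto simp: abs_le_iff)
  qed
  from emeasure_interval_le[OF this] assms show ?thesis by simp
qed


lemma meas_quad:
  fixes a c w \<delta> :: real
  assumes w: "0 \<le> w" and d: "0 \<le> \<delta>"
  shows "emeasure lborel {x. \<bar>a - 2*(x-c)^2\<bar> \<le> w \<and> \<delta> \<le> \<bar>x - c\<bar>} \<le> ennreal (2 * sqrt w)"
    and "0 < \<delta> \<Longrightarrow> emeasure lborel {x. \<bar>a - 2*(x-c)^2\<bar> \<le> w \<and> \<delta> \<le> \<bar>x - c\<bar>} \<le> ennreal (w / \<delta>)"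
proof -
  define hi where "hi = sqrt (max 0 ((a+w)/2))"
  define lo where "lo = max \<delta> (sqrt (max 0 ((a-w)/2)))"
  define X where "X = {x. \<bar>a - 2*(x-c)^2\<bar> \<le> w \<and> \<delta> \<le> \<bar>x - c\<bar>}"
  have lo0: "0 \<le> lo" using d by (simp add: lo_def)
  have hi0: "0 \<le> hi" by (simp add: hi_def)
  have sub: "X \<subseteq> {c - hi .. c - lo} \<union> {c + lo .. c + hi}"
  proof
    fix x assume "x \<in> X"
    then have x1: "\<bar>a - 2*(x-c)^2\<bar> \<le> w" and x2: "\<delta> \<le> \<bar>x - c\<bar>" by (auto simp: X_def)
    have "(x-c)^2 \<le> (a+w)/2" using x1 by (auto simp: abs_le_iff)
    then have "(x-c)^2 \<le> max 0 ((a+w)/2)" by (simp add: le_max_iff_disj)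
    then have "sqrt ((x-c)^2) \<le> hi" unfolding hi_def by (rule real_sqrt_le_mono)
    then have u: "\<bar>x - c\<bar> \<le> hi" by simp
    have "max 0 ((a-w)/2) \<le> (x-c)^2" using x1 by (auto simp: abs_le_iff)
    then have "sqrt (max 0 ((a-w)/2)) \<le> sqrt ((x-c)^2)" by (rule real_sqrt_le_mono)
    then have "lo \<le> \<bar>x - c\<bar>" using x2 by (simp add: lo_def)
    with u show "x \<in> {c - hi .. c - lo} \<union> {c + lo .. c + hi}" by (auto simp: abs_le_iff)
  qed
  define dd where "dd = max 0 (hi - lo)"
  have mX: "emeasure lborel X \<le> ennreal (2 * dd)"
  proof -
    have "emeasure lborel X \<le> emeasure lborel ({c - hi .. c - lo} \<union> {c + lo .. c + hi})"
      by (rule emeasure_mono[OF sub]) simp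
    also have "\<dots> \<le> emeasure lborel {c - hi .. c - lo} + emeasure lborel {c + lo .. c + hi}"
      by (rule emeasure_subadditive) auto
    also have "\<dots> \<le> ennreal dd + ennreal dd"
    proof (cases "lo \<le> hi")
      case True
      then show ?thesis by (simp add: dd_def)
    next
      case False
      then show ?thesis by simp
    qed
    also have "\<dots> = ennreal (2 * dd)" by (simp add: dd_def ennreal_plus[symmetric] del: ennreal_plus)
    finally show ?thesis .
  qed
  have key: "(hi - lo) * (hi + lo) \<le> w"
  proof -
    have "(hi - lo) * (hi + lo) = hi^2 - lo^2" by (simp add: power2_eq_square algebra_simps)
    also have "hi^2 = max 0 ((a+w)/2)" by (simp add: hi_def)
    also have "lo^2 \<ge> (sqrt (max 0 ((a-w)/2)))^2" unfolding lo_def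
      by (rule power_mono) auto
    then have "lo^2 \<ge> max 0 ((a-w)/2)" by simp
    then have "max 0 ((a+w)/2) - lo^2 \<le> max 0 ((a+w)/2) - max 0 ((a-w)/2)" by simp
    also have "\<dots> \<le> w" using w by (simp add: max_def field_simps)
    finally show ?thesis by simp
  qed
  have "dd \<le> sqrt w"
  proof (cases "lo \<le> hi")
    case True
    have "(hi - lo)^2 \<le> (hi - lo) * (hi + lo)"
      using True lo0 by (simp add: power2_eq_square mult_left_mono)
    also have "\<dots> \<le> w" by (rule key)
    finally have "sqrt ((hi - lo)^2) \<le> sqrt w" by (rule real_sqrt_le_mono)
    then show ?thesis using True by (simp add: dd_def)
  next
    case False then show ?thesis using w by (simp add: dd_def)
  qed
  then show "emeasure lborel X \<le> ennreal (2 * sqrt w)"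
    using mX by (meson ennreal_leI mult_left_mono order_trans zero_le_numeral)
  show "emeasure lborel X \<le> ennreal (w / \<delta>)" if dp: "0 < \<delta>"
  proof -
    have "dd \<le> w / (2 * \<delta>)"
    proof (cases "lo \<le> hi")
      case True
      have "\<delta> \<le> lo" by (simp add: lo_def)
      then have "(hi - lo) * (2 * \<delta>) \<le> (hi - lo) * (hi + lo)"
        using True by (intro mult_left_mono) auto
      with key have "(hi - lo) * (2 * \<delta>) \<le> w" by linarith
      then show ?thesis using True dp by (simp add: dd_def field_simps)
    next
      case False then show ?thesis using w dp by (simp add: dd_def)
    qed
    then have "2 * dd \<le> w / \<delta>" using dp by (simp add: field_simps)
    then show ?thesis using mX by (meson ennreal_leI order_trans)
  qed
qed




lemma Omega_alt: "Omega a b = (a+b)*\<bar>a+b\<bar> - a*\<bar>a\<bar> - b*\<bar>b\<bar>"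
  by (simp add: Omega_def omega_def algebra_simps)

lemma Om1: "0 \<le> x \<Longrightarrow> 0 \<le> z - x \<Longrightarrow> Omega x (z - x) = z*\<bar>z\<bar> - 2*(x - z/2)^2 - z^2/2"
  unfolding Omega_alt by (simp add: power2_eq_square algebra_simps)

lemma Om2: "x \<le> 0 \<Longrightarrow> z - x \<le> 0 \<Longrightarrow> Omega x (z - x) = z*\<bar>z\<bar> + 2*(x - z/2)^2 + z^2/2"
  unfolding Omega_alt by (simp add: power2_eq_square algebra_simps)

lemma Om3: "x \<le> 0 \<Longrightarrow> 0 \<le> z - x \<Longrightarrow> Omega x (z - x) = z*\<bar>z\<bar> - z^2 + 2*z*x"
  unfolding Omega_alt by (simp add: power2_eq_square algebra_simps)

lemma Om4: "0 \<le> x \<Longrightarrow> z - x \<le> 0 \<Longrightarrow> Omega x (z - x) = z*\<bar>z\<bar> + z^2 - 2*z*x"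
  unfolding Omega_alt by (simp add: power2_eq_square algebra_simps)


lemma SL:
  fixes z t w \<delta> :: real
  assumes z: "z \<noteq> 0" and w: "0 \<le> w" and d: "0 \<le> \<delta>"
  defines "X \<equiv> {x. \<bar>t - Omega x (z - x)\<bar> \<le> w \<and> (0 \<le> x * (z - x) \<longrightarrow> \<delta> \<le> \<bar>x - z/2\<bar>)}"
  shows "emeasure lborel X \<le> ennreal (2 * w / \<bar>z\<bar> + 4 * sqrt w)"
    and "0 < \<delta> \<Longrightarrow> emeasure lborel X \<le> ennreal (2 * w / \<bar>z\<bar> + 2 * (w / \<delta>))"
proof -
  define L1 where "L1 = {x. \<bar>(t - z*\<bar>z\<bar> + z^2) + (-2*z) * x\<bar> \<le> w}"
  define L2 where "L2 = {x. \<bar>(t - z*\<bar>z\<bar> - z^2) + (2*z) * x\<bar> \<le> w}"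
  define Q1 where "Q1 = {x. \<bar>(-(t - z*\<bar>z\<bar> + z^2/2)) - 2*(x - z/2)^2\<bar> \<le> w \<and> \<delta> \<le> \<bar>x - z/2\<bar>}"
  define Q2 where "Q2 = {x. \<bar>(t - z*\<bar>z\<bar> - z^2/2) - 2*(x - z/2)^2\<bar> \<le> w \<and> \<delta> \<le> \<bar>x - z/2\<bar>}"
  have mS[measurable]: "L1 \<in> sets lborel" "L2 \<in> sets lborel" "Q1 \<in> sets lborel" "Q2 \<in> sets lborel"
    unfolding L1_def L2_def Q1_def Q2_def by measurable
  have sub: "X \<subseteq> (L1 \<union> L2) \<union> (Q1 \<union> Q2)"
  proof
    fix x assume xX: "x \<in> X"
    then have h1: "\<bar>t - Omega x (z - x)\<bar> \<le> w" and h2: "0 \<le> x * (z - x) \<Longrightarrow> \<delta> \<le> \<bar>x - z/2\<bar>"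
      by (auto simp: X_def)
    consider "0 \<le> x" "0 \<le> z - x" | "x \<le> 0" "z - x \<le> 0" | "x \<le> 0" "0 \<le> z - x"
      | "0 \<le> x" "z - x \<le> 0"
      by linarith
    then show "x \<in> (L1 \<union> L2) \<union> (Q1 \<union> Q2)"
    proof cases
      case 1
      have "\<delta> \<le> \<bar>x - z/2\<bar>" using 1 by (intro h2) simp
      moreover have "\<bar>(-(t - z*\<bar>z\<bar> + z^2/2)) - 2*(x - z/2)^2\<bar> = \<bar>t - Omega x (z - x)\<bar>"
        unfolding Om1[OF 1] by (simp add: abs_minus_commute)
      ultimately have "x \<in> Q1" using h1 unfolding Q1_def by simp
      then show ?thesis by simp
    next
      case 2
      have "\<delta> \<le> \<bar>x - z/2\<bar>" using 2 by (intro h2) (simp add: mult_nonpos_nonpos)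
      moreover have "\<bar>(t - z*\<bar>z\<bar> - z^2/2) - 2*(x - z/2)^2\<bar> = \<bar>t - Omega x (z - x)\<bar>"
        unfolding Om2[OF 2] by simp
      ultimately have "x \<in> Q2" using h1 unfolding Q2_def by simp
      then show ?thesis by simp
    next
      case 3
      have "\<bar>(t - z*\<bar>z\<bar> + z^2) + (-2*z) * x\<bar> = \<bar>t - Omega x (z - x)\<bar>"
        unfolding Om3[OF 3] by simp
      then have "x \<in> L1" using h1 unfolding L1_def by simp
      then show ?thesis by simp
    next
      case 4
      have "\<bar>(t - z*\<bar>z\<bar> - z^2) + (2*z) * x\<bar> = \<bar>t - Omega x (z - x)\<bar>"
        unfolding Om4[OF 4] by simp
      then have "x \<in> L2" using h1 unfolding L2_def by simp
      then show ?thesis by simp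
    qed
  qed
  have mL: "emeasure lborel (L1 \<union> L2) \<le> ennreal (2 * w / \<bar>z\<bar>)"
  proof -
    have "emeasure lborel (L1 \<union> L2) \<le> emeasure lborel L1 + emeasure lborel L2"
      by (rule emeasure_subadditive) (use mS in auto)
    also have "\<dots> \<le> ennreal (2 * w / \<bar>-2*z\<bar>) + ennreal (2 * w / \<bar>2*z\<bar>)"
      unfolding L1_def L2_def using z w by (intro add_mono meas_lin) auto
    also have "\<dots> = ennreal (2 * w / \<bar>z\<bar>)"
      using w by (simp add: ennreal_plus[symmetric] abs_mult del: ennreal_plus)
    finally show ?thesis .
  qed
  have XQ: "emeasure lborel X \<le> ennreal (2 * w / \<bar>z\<bar>) + (emeasure lborel Q1 + emeasure lborel Q2)"
  proof -
    have "emeasure lborel X \<le> emeasure lborel ((L1 \<union> L2) \<union> (Q1 \<union> Q2))"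
      by (rule emeasure_mono[OF sub]) (use mS in auto)
    also have "\<dots> \<le> emeasure lborel (L1 \<union> L2) + emeasure lborel (Q1 \<union> Q2)"
      by (rule emeasure_subadditive) (use mS in auto)
    also have "\<dots> \<le> ennreal (2 * w / \<bar>z\<bar>) + (emeasure lborel Q1 + emeasure lborel Q2)"
      by (intro add_mono mL emeasure_subadditive) (use mS in auto)
    finally show ?thesis .
  qed
  have "emeasure lborel Q1 + emeasure lborel Q2 \<le> ennreal (2 * sqrt w) + ennreal (2 * sqrt w)"
    unfolding Q1_def Q2_def by (intro add_mono meas_quad(1) w d)
  then have "emeasure lborel X \<le> ennreal (2 * w / \<bar>z\<bar>) + (ennreal (2 * sqrt w) + ennreal (2 * sqrt w))"
    using XQ by (meson add_left_mono order_trans)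
  also have "\<dots> = ennreal (2 * w / \<bar>z\<bar> + 4 * sqrt w)"
    using w by (simp add: ennreal_plus[symmetric] del: ennreal_plus)
  finally show "emeasure lborel X \<le> ennreal (2 * w / \<bar>z\<bar> + 4 * sqrt w)" .
  show "emeasure lborel X \<le> ennreal (2 * w / \<bar>z\<bar> + 2 * (w / \<delta>))" if dp: "0 < \<delta>"
  proof -
    have "emeasure lborel Q1 + emeasure lborel Q2 \<le> ennreal (w / \<delta>) + ennreal (w / \<delta>)"
      unfolding Q1_def Q2_def by (intro add_mono meas_quad(2) w d dp)
    then have "emeasure lborel X \<le> ennreal (2 * w / \<bar>z\<bar>) + (ennreal (w / \<delta>) + ennreal (w / \<delta>))"
      using XQ by (meson add_left_mono order_trans)
    also have "\<dots> = ennreal (2 * w / \<bar>z\<bar> + 2 * (w / \<delta>))"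
      using w dp by (simp add: ennreal_plus[symmetric] del: ennreal_plus)
    finally show ?thesis .
  qed
qed



lemma sep_ab:
  fixes a b P1 P2 P3 :: real
  assumes "0 \<le> a" "0 \<le> b" "P1/2 \<le> a" "a \<le> 2*P1" "P2/2 \<le> b" "b \<le> 2*P2"
    "P3/2 \<le> a + b" "a + b \<le> 2*P3" "0 < P1" "0 < P2" "0 < P3"
    and sep: "32*P1 \<le> P2 \<or> 32*P1 \<le> P3 \<or> 32*P2 \<le> P1 \<or> 32*P2 \<le> P3 \<or> 32*P3 \<le> P1 \<or> 32*P3 \<le> P2"
  shows "P3/8 \<le> \<bar>a - b\<bar>"
  using sep
proof (elim disjE)
  assume "32*P1 \<le> P2" then show ?thesis using assms by (simp add: abs_if; linarith)
next
  assume "32*P1 \<le> P3" then show ?thesis using assms by (simp add: abs_if; linarith)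
next
  assume "32*P2 \<le> P1" then show ?thesis using assms by (simp add: abs_if; linarith)
next
  assume "32*P2 \<le> P3" then show ?thesis using assms by (simp add: abs_if; linarith)
next
  assume "32*P3 \<le> P1" then show ?thesis using assms by (simp add: abs_if; linarith)
next
  assume "32*P3 \<le> P2" then show ?thesis using assms by (simp add: abs_if; linarith)
qed

lemma sep_lemma:
  fixes x z P1 P2 P3 :: real
  assumes "P1/2 \<le> \<bar>x\<bar>" "\<bar>x\<bar> \<le> 2*P1" "P2/2 \<le> \<bar>z - x\<bar>" "\<bar>z - x\<bar> \<le> 2*P2"
    "P3/2 \<le> \<bar>z\<bar>" "\<bar>z\<bar> \<le> 2*P3" "0 < P1" "0 < P2" "0 < P3"
    and sep: "32*P1 \<le> P2 \<or> 32*P1 \<le> P3 \<or> 32*P2 \<le> P1 \<or> 32*P2 \<le> P3 \<or> 32*P3 \<le> P1 \<or> 32*P3 \<le> P2"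
    and ss: "0 \<le> x * (z - x)"
  shows "P3/16 \<le> \<bar>x - z/2\<bar>"
proof -
  from ss consider "0 \<le> x" "0 \<le> z - x" | "x \<le> 0" "z - x \<le> 0"
    by (auto simp: zero_le_mult_iff)
  then show ?thesis
  proof cases
    case 1
    have "P3/8 \<le> \<bar>x - (z - x)\<bar>"
      using sep_ab[of x "z - x" P1 P2 P3] 1 assms by simp
    moreover have "\<bar>x - (z - x)\<bar> = 2 * \<bar>x - z/2\<bar>" by (simp add: abs_if; linarith)
    ultimately show ?thesis by linarith
  next
    case 2
    have "P3/8 \<le> \<bar>(-x) - (-(z - x))\<bar>"
      using sep_ab[of "-x" "-(z - x)" P1 P2 P3] 2 assms by simp
    moreover have "\<bar>(-x) - (-(z - x))\<bar> = 2 * \<bar>x - z/2\<bar>" by (simp add: abs_if; linarith)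
    ultimately show ?thesis by linarith
  qed
qed



lemma FibX:
  fixes A :: "(real \<times> real) set"
  assumes mA[measurable]: "A \<in> sets L2M" and mB[measurable]: "B \<in> sets lborel" and c: "0 \<le> c"
    and sec: "\<And>x. emeasure lborel {y. (x,y) \<in> A} \<le> ennreal c"
    and proj: "\<And>x y. (x,y) \<in> A \<Longrightarrow> x \<in> B"
  shows "emeasure L2M A \<le> ennreal c * emeasure lborel B"
proof -
  have "emeasure L2M A = (\<integral>\<^sup>+x. emeasure lborel (Pair x -` A) \<partial>lborel)"
    by (rule lborel.emeasure_pair_measure_alt) (use mA in simp)
  also have "\<dots> \<le> (\<integral>\<^sup>+x. ennreal c * indicator B x \<partial>lborel)"
  proof (rule nn_integral_mono)
    fix x
    show "emeasure lborel (Pair x -` A) \<le> ennreal c * indicator B x"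
    proof (cases "x \<in> B")
      case True
      have "Pair x -` A = {y. (x,y) \<in> A}" by auto
      then show ?thesis using sec[of x] True by simp
    next
      case False
      then have "Pair x -` A = {}" using proj by auto
      then show ?thesis by simp
    qed
  qed
  also have "\<dots> = ennreal c * emeasure lborel B"
    by (rule nn_integral_cmult_indicator) (use mB in simp)
  finally show ?thesis .
qed

lemma FibY:
  fixes A :: "(real \<times> real) set"
  assumes mA[measurable]: "A \<in> sets L2M" and c: "0 \<le> c" and Q: "0 \<le> Q"
    and sec: "\<And>y. emeasure lborel {x. (x,y) \<in> A} \<le> ennreal c"
    and proj: "\<And>x y. (x,y) \<in> A \<Longrightarrow> \<bar>y\<bar> \<le> 2*Q"
  shows "emeasure L2M A \<le> ennreal (4 * Q * c)"
proof -
  define B where "B = {y::real. \<bar>y\<bar> \<le> 2*Q}"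
  have mB[measurable]: "B \<in> sets lborel" unfolding B_def by measurable
  have "emeasure L2M A = (\<integral>\<^sup>+y. emeasure lborel ((\<lambda>x. (x, y)) -` A) \<partial>lborel)"
    by (rule lborel_pair.emeasure_pair_measure_alt2) (use mA in simp)
  also have "\<dots> \<le> (\<integral>\<^sup>+y. ennreal c * indicator B y \<partial>lborel)"
  proof (rule nn_integral_mono)
    fix y
    show "emeasure lborel ((\<lambda>x. (x, y)) -` A) \<le> ennreal c * indicator B y"
    proof (cases "y \<in> B")
      case True
      have "(\<lambda>x. (x, y)) -` A = {x. (x,y) \<in> A}" by auto
      then show ?thesis using sec[of y] True by simp
    next
      case False
      then have "(\<lambda>x. (x, y)) -` A = {}" using proj by (auto simp: B_def)
      then show ?thesis by simp
    qed
  qed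
  also have "\<dots> = ennreal c * emeasure lborel B"
    by (rule nn_integral_cmult_indicator) (use mB in simp)
  also have "B = {-(2*Q) .. 2*Q}" unfolding B_def by (auto simp: abs_le_iff)
  also have "ennreal c * emeasure lborel {-(2*Q) .. 2*Q} = ennreal (4 * Q * c)"
    using Q c by (simp add: ennreal_mult[symmetric] mult_ac)
  finally show ?thesis .
qed

definition Supp :: "real \<Rightarrow> real \<Rightarrow> (real \<times> real) set" where
  "Supp P Q = {r. P/2 \<le> \<bar>fst r\<bar> \<and> \<bar>fst r\<bar> \<le> 2*P \<and> \<bar>snd r\<bar> \<le> 2*Q}"

lemma Supp_meas[measurable]: "Supp P Q \<in> sets L2M"
proof -
  have "Supp P Q = {r \<in> space L2M. P/2 \<le> \<bar>fst r\<bar> \<and> \<bar>fst r\<bar> \<le> 2*P \<and> \<bar>snd r\<bar> \<le> 2*Q}"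
    by (simp add: Supp_def)
  also have "\<dots> \<in> sets L2M" by measurable
  finally show ?thesis .
qed

definition Fb :: "real \<Rightarrow> real \<Rightarrow> real \<Rightarrow> real \<Rightarrow> real \<times> real \<Rightarrow> (real \<times> real) set" where
  "Fb P1 Q1 P2 Q2 r = {p. p \<in> Supp P1 Q1 \<and> Si p r \<in> Supp P2 Q2}"

lemma Fb_meas[measurable]: "Fb P1 Q1 P2 Q2 r \<in> sets L2M"
proof -
  have "Fb P1 Q1 P2 Q2 r = {p \<in> space L2M. p \<in> Supp P1 Q1 \<and> Si p r \<in> Supp P2 Q2}"
    by (simp add: Fb_def)
  also have "\<dots> \<in> sets L2M" by measurable
  finally show ?thesis .
qed

lemma Fb_mem: "(x, y) \<in> Fb P1 Q1 P2 Q2 (z, v) \<longleftrightarrow>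
   P1/2 \<le> \<bar>x\<bar> \<and> \<bar>x\<bar> \<le> 2*P1 \<and> \<bar>y\<bar> \<le> 2*Q1 \<and>
   P2/2 \<le> \<bar>z - x\<bar> \<and> \<bar>z - x\<bar> \<le> 2*P2 \<and> \<bar>v - y - Omega x (z - x)\<bar> \<le> 2*Q2"
  by (simp add: Fb_def Supp_def Si_def)

lemma FibA:
  assumes "0 < P1" "0 < P2" "0 < Q1" "0 < Q2"
  shows "emeasure L2M (Fb P1 Q1 P2 Q2 r) \<le> ennreal (16 * min P1 P2 * min Q1 Q2)"
proof -
  obtain z v where r: "r = (z, v)" by (cases r)
  define B where "B = {x. \<bar>x - 0\<bar> \<le> 2*P1 \<and> \<bar>x - z\<bar> \<le> 2*P2}"
  have mB[measurable]: "B \<in> sets lborel" unfolding B_def by measurable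
  have "emeasure L2M (Fb P1 Q1 P2 Q2 r) \<le> ennreal (2 * min (2*Q1) (2*Q2)) * emeasure lborel B"
  proof (rule FibX)
    show "0 \<le> 2 * min (2*Q1) (2*Q2)" using assms by simp
  next
    fix x
    have "{y. (x,y) \<in> Fb P1 Q1 P2 Q2 r} \<subseteq> {y. \<bar>y - 0\<bar> \<le> 2*Q1 \<and> \<bar>y - (v - Omega x (z - x))\<bar> \<le> 2*Q2}"
      by (auto simp: r Fb_mem abs_minus_commute algebra_simps)
    then have "emeasure lborel {y. (x,y) \<in> Fb P1 Q1 P2 Q2 r} \<le> emeasure lborel {y. \<bar>y - 0\<bar> \<le> 2*Q1 \<and> \<bar>y - (v - Omega x (z - x))\<bar> \<le> 2*Q2}"
      by (rule emeasure_mono) measurable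
    also have "\<dots> \<le> ennreal (2 * min (2*Q1) (2*Q2))"
      by (rule meas_two_abs) (use assms in auto)
    finally show "emeasure lborel {y. (x,y) \<in> Fb P1 Q1 P2 Q2 r} \<le> ennreal (2 * min (2*Q1) (2*Q2))" .
  next
    fix x y assume "(x,y) \<in> Fb P1 Q1 P2 Q2 r"
    then show "x \<in> B" by (auto simp: r Fb_mem B_def abs_minus_commute)
  qed (use mB Fb_meas in simp_all)
  also have "\<dots> \<le> ennreal (2 * min (2*Q1) (2*Q2)) * ennreal (2 * min (2*P1) (2*P2))"
    unfolding B_def by (intro mult_left_mono meas_two_abs) (use assms in auto)
  also have "\<dots> = ennreal (16 * min P1 P2 * min Q1 Q2)"
    using assms by (simp add: ennreal_mult[symmetric] min_def)
  finally show ?thesis .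
qed


lemma FibB:
  assumes P: "0 < P1" "0 < P2" "0 < P3" and Q: "0 < Q1" "0 < Q2"
    and r: "r \<in> Supp P3 Q3"
    and sep: "32*P1 \<le> P2 \<or> 32*P1 \<le> P3 \<or> 32*P2 \<le> P1 \<or> 32*P2 \<le> P3 \<or> 32*P3 \<le> P1 \<or> 32*P3 \<le> P2"
  shows "emeasure L2M (Fb P1 Q1 P2 Q2 r) \<le> ennreal (4 * Q1 * (72 * Q2 / P3))"
proof -
  obtain z v where rr: "r = (z, v)" by (cases r)
  have z: "P3/2 \<le> \<bar>z\<bar>" "\<bar>z\<bar> \<le> 2*P3" using r by (auto simp: rr Supp_def)
  then have z0: "z \<noteq> 0" using P by auto
  show ?thesis
  proof (rule FibY)
    show "0 \<le> 72 * Q2 / P3" using P Q by simp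
    show "0 \<le> Q1" using Q by simp
  next
    fix y
    define X where "X = {x. \<bar>(v - y) - Omega x (z - x)\<bar> \<le> 2*Q2 \<and> (0 \<le> x * (z - x) \<longrightarrow> P3/16 \<le> \<bar>x - z/2\<bar>)}"
    have mX: "X \<in> sets lborel" unfolding X_def by measurable
    have "{x. (x,y) \<in> Fb P1 Q1 P2 Q2 r} \<subseteq> X"
    proof
      fix x assume "x \<in> {x. (x,y) \<in> Fb P1 Q1 P2 Q2 r}"
      then have h: "P1/2 \<le> \<bar>x\<bar>" "\<bar>x\<bar> \<le> 2*P1" "P2/2 \<le> \<bar>z - x\<bar>" "\<bar>z - x\<bar> \<le> 2*P2"
        "\<bar>v - y - Omega x (z - x)\<bar> \<le> 2*Q2"
        by (auto simp: rr Fb_mem)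
      show "x \<in> X" unfolding X_def using h sep_lemma[OF h(1-4) z P sep] by auto
    qed
    then have "emeasure lborel {x. (x,y) \<in> Fb P1 Q1 P2 Q2 r} \<le> emeasure lborel X"
      by (rule emeasure_mono) (use mX in simp)
    also have "\<dots> \<le> ennreal (2 * (2*Q2) / \<bar>z\<bar> + 2 * ((2*Q2) / (P3/16)))"
      unfolding X_def by (rule SL(2)) (use z0 Q P in auto)
    also have "\<dots> \<le> ennreal (72 * Q2 / P3)"
    proof (rule ennreal_leI)
      have "2 * (2*Q2) / \<bar>z\<bar> \<le> 2 * (2*Q2) / (P3/2)"
        using z P Q by (intro divide_left_mono) auto
      moreover have "2*(2*Q2)/(P3/2) = 8*Q2/P3" using P by (simp_all add: field_simps)
      ultimately have h: "2*(2*Q2)/\<bar>z\<bar> \<le> 8*Q2/P3" by simp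
      have e: "2*((2*Q2)/(P3/16)) = 64*Q2/P3" "72*Q2/P3 = 8*Q2/P3 + 64*Q2/P3"
        using P by (simp_all add: field_simps)
      show "2 * (2*Q2) / \<bar>z\<bar> + 2 * ((2*Q2) / (P3/16)) \<le> 72 * Q2 / P3"
        unfolding e by (rule add_right_mono[OF h])
    qed
    finally show "emeasure lborel {x. (x,y) \<in> Fb P1 Q1 P2 Q2 r} \<le> ennreal (72 * Q2 / P3)" .
  next
    fix x y assume "(x, y) \<in> Fb P1 Q1 P2 Q2 r"
    then show "\<bar>y\<bar> \<le> 2*Q1" by (auto simp: rr Fb_mem)
  qed (use Fb_meas in simp)
qed

lemma FibC:
  assumes P: "0 < P1" "0 < P2" "0 < P3" and Q: "0 < Q1" "0 < Q2"
    and r: "r \<in> Supp P3 Q3"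
  shows "emeasure L2M (Fb P1 Q1 P2 Q2 r) \<le> ennreal (4 * Q1 * (8 * Q2 / P3 + 4 * sqrt (2 * Q2)))"
proof -
  obtain z v where rr: "r = (z, v)" by (cases r)
  have z: "P3/2 \<le> \<bar>z\<bar>" "\<bar>z\<bar> \<le> 2*P3" using r by (auto simp: rr Supp_def)
  then have z0: "z \<noteq> 0" using P by auto
  show ?thesis
  proof (rule FibY)
    show "0 \<le> 8 * Q2 / P3 + 4 * sqrt (2 * Q2)" using P Q by simp
    show "0 \<le> Q1" using Q by simp
  next
    fix y
    define X where "X = {x. \<bar>(v - y) - Omega x (z - x)\<bar> \<le> 2*Q2 \<and> (0 \<le> x * (z - x) \<longrightarrow> 0 \<le> \<bar>x - z/2\<bar>)}"
    have mX: "X \<in> sets lborel" unfolding X_def by measurable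
    have "{x. (x,y) \<in> Fb P1 Q1 P2 Q2 r} \<subseteq> X"
      by (auto simp: rr Fb_mem X_def)
    then have "emeasure lborel {x. (x,y) \<in> Fb P1 Q1 P2 Q2 r} \<le> emeasure lborel X"
      by (rule emeasure_mono) (use mX in simp)
    also have "\<dots> \<le> ennreal (2 * (2*Q2) / \<bar>z\<bar> + 4 * sqrt (2*Q2))"
      unfolding X_def by (rule SL(1)) (use z0 Q P in auto)
    also have "\<dots> \<le> ennreal (8 * Q2 / P3 + 4 * sqrt (2 * Q2))"
    proof (rule ennreal_leI)
      have "2 * (2*Q2) / \<bar>z\<bar> \<le> 2 * (2*Q2) / (P3/2)"
        using z P Q by (intro divide_left_mono) auto
      moreover have "2*(2*Q2)/(P3/2) = 8*Q2/P3" using P by (simp add: field_simps)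
      ultimately have h: "2*(2*Q2)/\<bar>z\<bar> \<le> 8*Q2/P3" by simp
      show "2 * (2*Q2) / \<bar>z\<bar> + 4 * sqrt (2*Q2) \<le> 8 * Q2 / P3 + 4 * sqrt (2 * Q2)"
        by (rule add_right_mono[OF h])
    qed
    finally show "emeasure lborel {x. (x,y) \<in> Fb P1 Q1 P2 Q2 r} \<le> ennreal (8 * Q2 / P3 + 4 * sqrt (2 * Q2))" .
  next
    fix x y assume "(x, y) \<in> Fb P1 Q1 P2 Q2 r"
    then show "\<bar>y\<bar> \<le> 2*Q1" by (auto simp: rr Fb_mem)
  qed (use Fb_meas in simp)
qed



definition good :: "(real \<times> real \<Rightarrow> ennreal) \<Rightarrow> real \<Rightarrow> real \<Rightarrow> bool" where
  "good F P Q \<longleftrightarrow> F \<in> borel_measurable L2M \<and> (\<forall>r. r \<notin> Supp P Q \<longrightarrow> F r = 0)"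

lemma good_RR: "good F P Q \<Longrightarrow> good (RR F) P Q"
  unfolding good_def RR_def by (auto simp: Supp_def)

definition BA :: "real \<Rightarrow> real \<Rightarrow> real \<Rightarrow> real \<Rightarrow> real" where
  "BA P1 P2 Q1 Q2 = 16 * min P1 P2 * min Q1 Q2"
definition BB :: "real \<Rightarrow> real \<Rightarrow> real \<Rightarrow> real" where
  "BB Q1 Q2 P3 = 4 * Q1 * (72 * Q2 / P3)"
definition BC :: "real \<Rightarrow> real \<Rightarrow> real \<Rightarrow> real" where
  "BC Q1 Q2 P3 = 4 * Q1 * (8 * Q2 / P3 + 4 * sqrt (2 * Q2))"

definition sepc :: "real \<Rightarrow> real \<Rightarrow> real \<Rightarrow> bool" where
  "sepc P1 P2 P3 \<longleftrightarrow> 32*P1 \<le> P2 \<or> 32*P1 \<le> P3 \<or> 32*P2 \<le> P1 \<or> 32*P2 \<le> P3 \<or> 32*P3 \<le> P1 \<or> 32*P3 \<le> P2"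

lemma FL_good:
  assumes g: "good F1 P1 Q1" "good F2 P2 Q2" "good F3 P3 Q3"
    and fib: "\<And>r. r \<in> Supp P3 Q3 \<Longrightarrow> emeasure L2M (Fb P1 Q1 P2 Q2 r) \<le> M"
  shows "(Ient F1 F2 F3)^2 \<le> M * (NN F1 * NN F2 * NN F3)"
proof -
  have "(Ient F1 F2 F3)^2 \<le> M * NN F1 * NN F2 * NN F3"
  proof (rule FL[of F1 F2 F3 "Supp P1 Q1" "Supp P2 Q2" "Supp P3 Q3"])
    show "F1 \<in> borel_measurable L2M" "F2 \<in> borel_measurable L2M" "F3 \<in> borel_measurable L2M"
      using g by (simp_all add: good_def)
    show "Supp P1 Q1 \<in> sets L2M" "Supp P2 Q2 \<in> sets L2M" "Supp P3 Q3 \<in> sets L2M"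
      by (rule Supp_meas)+
    show "\<And>r. r \<notin> Supp P1 Q1 \<Longrightarrow> F1 r = 0" "\<And>r. r \<notin> Supp P2 Q2 \<Longrightarrow> F2 r = 0"
      "\<And>r. r \<notin> Supp P3 Q3 \<Longrightarrow> F3 r = 0"
      using g unfolding good_def by blast+
    show "\<And>r. r \<in> Supp P3 Q3 \<Longrightarrow> emeasure L2M {p. p \<in> Supp P1 Q1 \<and> Si p r \<in> Supp P2 Q2} \<le> M"
      using fib by (simp add: Fb_def)
  qed
  then show ?thesis by (simp add: mult_ac)
qed

lemma CORE:
  assumes g: "good F1 P1 Q1" "good F2 P2 Q2" "good F3 P3 Q3"
    and P: "0 < P1" "0 < P2" "0 < P3" and Q: "0 < Q1" "0 < Q2" "0 < Q3"
  shows "(Ient F1 F2 F3)^2 \<le> ennreal (BA P1 P2 Q1 Q2) * (NN F1 * NN F2 * NN F3)"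
    and "sepc P1 P2 P3 \<Longrightarrow> (Ient F1 F2 F3)^2 \<le> ennreal (BB Q1 Q2 P3) * (NN F1 * NN F2 * NN F3)"
    and "(Ient F1 F2 F3)^2 \<le> ennreal (BC Q1 Q2 P3) * (NN F1 * NN F2 * NN F3)"
proof -
  show "(Ient F1 F2 F3)^2 \<le> ennreal (BA P1 P2 Q1 Q2) * (NN F1 * NN F2 * NN F3)"
    by (rule FL_good[OF g]) (unfold BA_def, rule FibA, use P Q in auto)
  show "(Ient F1 F2 F3)^2 \<le> ennreal (BB Q1 Q2 P3) * (NN F1 * NN F2 * NN F3)" if s: "sepc P1 P2 P3"
    by (rule FL_good[OF g]) (unfold BB_def, rule FibB, use P Q s in \<open>auto simp: sepc_def\<close>)
  show "(Ient F1 F2 F3)^2 \<le> ennreal (BC Q1 Q2 P3) * (NN F1 * NN F2 * NN F3)"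
    by (rule FL_good[OF g]) (unfold BC_def, rule FibC, use P Q in auto)
qed


lemma good_meas: "good F P Q \<Longrightarrow> F \<in> borel_measurable L2M"
  by (simp add: good_def)

lemma REP:
  fixes F :: "nat \<Rightarrow> real \<times> real \<Rightarrow> ennreal" and P Q :: "nat \<Rightarrow> real"
  assumes g1: "good (F 1) (P 1) (Q 1)" and g2: "good (F 2) (P 2) (Q 2)" and g3: "good (F 3) (P 3) (Q 3)"
    and perm: "(a,b,c) \<in> {(1,2,3),(2,1,3),(1,3,2),(3,1,2),(2,3,1),(3,2,1)}"
  shows "\<exists>G1 G2 G3. Ient (F 1) (F 2) (F 3) = Ient G1 G2 G3 \<and> good G1 (P a) (Q a) \<and> good G2 (P b) (Q b)
     \<and> good G3 (P c) (Q c) \<and> NN G1 * NN G2 * NN G3 = NN (F 1) * NN (F 2) * NN (F 3)"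
proof -
  note m = good_meas[OF g1] good_meas[OF g2] good_meas[OF g3]
  note mR = RR_meas[OF m(1)] RR_meas[OF m(2)] RR_meas[OF m(3)]
  note gR = good_RR[OF g1] good_RR[OF g2] good_RR[OF g3]
  note nR = NN_RR[OF m(1)] NN_RR[OF m(2)] NN_RR[OF m(3)]
  have s1: "Ient (F 1) (F 2) (F 3) = Ient (F 2) (F 1) (F 3)" by (rule Sym1[OF m])
  have s2: "Ient (F 1) (F 2) (F 3) = Ient (F 1) (RR (F 3)) (RR (F 2))" by (rule Sym2[OF m])
  have s3: "Ient (F 1) (F 2) (F 3) = Ient (RR (F 3)) (F 1) (RR (F 2))"
    using s2 Sym1[OF m(1) mR(3) mR(2)] by simp
  have s4: "Ient (F 1) (F 2) (F 3) = Ient (F 2) (RR (F 3)) (RR (F 1))"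
    using s1 Sym2[OF m(2) m(1) m(3)] by simp
  have s5: "Ient (F 1) (F 2) (F 3) = Ient (RR (F 3)) (F 2) (RR (F 1))"
    using s4 Sym1[OF m(2) mR(3) mR(1)] by simp
  from perm show ?thesis
  proof (elim insertE)
    assume "(a,b,c) = (1,2,3)" then show ?thesis using g1 g2 g3 by blast
  next
    assume "(a,b,c) = (2,1,3)" then show ?thesis using g1 g2 g3 s1
      by (intro exI[of _ "F 2"] exI[of _ "F 1"] exI[of _ "F 3"]) (auto simp: mult_ac)
  next
    assume "(a,b,c) = (1,3,2)" then show ?thesis using g1 gR s2 nR
      by (intro exI[of _ "F 1"] exI[of _ "RR (F 3)"] exI[of _ "RR (F 2)"]) (auto simp: mult_ac)
  next
    assume "(a,b,c) = (3,1,2)" then show ?thesis using g1 gR s3 nR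
      by (intro exI[of _ "RR (F 3)"] exI[of _ "F 1"] exI[of _ "RR (F 2)"]) (auto simp: mult_ac)
  next
    assume "(a,b,c) = (2,3,1)" then show ?thesis using g2 gR s4 nR
      by (intro exI[of _ "F 2"] exI[of _ "RR (F 3)"] exI[of _ "RR (F 1)"]) (auto simp: mult_ac)
  next
    assume "(a,b,c) = (3,2,1)" then show ?thesis using g2 gR s5 nR
      by (intro exI[of _ "RR (F 3)"] exI[of _ "F 2"] exI[of _ "RR (F 1)"]) (auto simp: mult_ac)
  qed simp
qed

lemma MASTER:
  fixes F :: "nat \<Rightarrow> real \<times> real \<Rightarrow> ennreal" and P Q :: "nat \<Rightarrow> real"
  assumes g1: "good (F 1) (P 1) (Q 1)" and g2: "good (F 2) (P 2) (Q 2)" and g3: "good (F 3) (P 3) (Q 3)"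
    and pos: "0 < P 1" "0 < P 2" "0 < P 3" "0 < Q 1" "0 < Q 2" "0 < Q 3"
    and perm: "(a,b,c) \<in> {(1,2,3),(2,1,3),(1,3,2),(3,1,2),(2,3,1),(3,2,1)}"
  shows "(Ient (F 1) (F 2) (F 3))^2 \<le> ennreal (BA (P a) (P b) (Q a) (Q b)) * (NN (F 1) * NN (F 2) * NN (F 3))"
    and "sepc (P 1) (P 2) (P 3) \<Longrightarrow> (Ient (F 1) (F 2) (F 3))^2 \<le> ennreal (BB (Q a) (Q b) (P c)) * (NN (F 1) * NN (F 2) * NN (F 3))"
    and "(Ient (F 1) (F 2) (F 3))^2 \<le> ennreal (BC (Q a) (Q b) (P c)) * (NN (F 1) * NN (F 2) * NN (F 3))"
proof -
  obtain G1 G2 G3 where G: "Ient (F 1) (F 2) (F 3) = Ient G1 G2 G3" "good G1 (P a) (Q a)" "good G2 (P b) (Q b)"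
     "good G3 (P c) (Q c)" "NN G1 * NN G2 * NN G3 = NN (F 1) * NN (F 2) * NN (F 3)"
    using REP[OF g1 g2 g3 perm] by blast
  have pa: "0 < P a" "0 < P b" "0 < P c" "0 < Q a" "0 < Q b" "0 < Q c"
    using perm pos by auto
  note C = CORE[OF G(2) G(3) G(4) pa]
  show "(Ient (F 1) (F 2) (F 3))^2 \<le> ennreal (BA (P a) (P b) (Q a) (Q b)) * (NN (F 1) * NN (F 2) * NN (F 3))"
    using C(1) G(1) G(5) by simp
  show "(Ient (F 1) (F 2) (F 3))^2 \<le> ennreal (BC (Q a) (Q b) (P c)) * (NN (F 1) * NN (F 2) * NN (F 3))"
    using C(3) G(1) G(5) by simp
  assume s: "sepc (P 1) (P 2) (P 3)"
  have "sepc (P a) (P b) (P c)" using perm s by (auto simp: sepc_def)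
  then show "(Ient (F 1) (F 2) (F 3))^2 \<le> ennreal (BB (Q a) (Q b) (P c)) * (NN (F 1) * NN (F 2) * NN (F 3))"
    using C(2) G(1) G(5) by simp
qed



lemma lborel4: "(lborel :: ((real \<times> real) \<times> (real \<times> real)) measure) = L2M \<Otimes>\<^sub>M L2M"
  by (simp add: lborel_prod)

lemma sfL: "sigma_finite_measure L2M"
  by (simp add: lborel_prod sigma_finite_lborel)

lemma J_conv:
  fixes f1 f2 f3 :: "real \<times> real \<Rightarrow> complex"
  assumes [measurable]: "f1 \<in> borel_measurable L2M" "f2 \<in> borel_measurable L2M" "f3 \<in> borel_measurable L2M"
    and bnd: "Ient (\<lambda>r. ennreal (norm (f1 r))) (\<lambda>r. ennreal (norm (f2 r))) (\<lambda>r. ennreal (norm (f3 r))) \<le> ennreal B"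
    and B: "0 \<le> B"
  shows "norm (J f1 f2 f3) \<le> B"
proof -
  define g where "g x = f1 (fst x) * f2 (snd x) * f3 (Sm (fst x) (snd x))" for x :: "(real \<times> real) \<times> (real \<times> real)"
  have gm[measurable]: "g \<in> borel_measurable (L2M \<Otimes>\<^sub>M L2M)" unfolding g_def by measurable
  have J: "J f1 f2 f3 = integral\<^sup>L (L2M \<Otimes>\<^sub>M L2M) g"
    unfolding J_def lborel4
    by (rule Bochner_Integration.integral_cong) (auto simp: g_def Sm_def split: prod.splits)
  have "(\<integral>\<^sup>+x. ennreal (norm (g x)) \<partial>(L2M \<Otimes>\<^sub>M L2M)) = (\<integral>\<^sup>+p. \<integral>\<^sup>+q. ennreal (norm (g (p,q))) \<partial>L2M \<partial>L2M)"
    by (rule sigma_finite_measure.nn_integral_fst[OF sfL, symmetric]) measurable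
  also have "\<dots> = Ient (\<lambda>r. ennreal (norm (f1 r))) (\<lambda>r. ennreal (norm (f2 r))) (\<lambda>r. ennreal (norm (f3 r)))"
    unfolding Ient_def g_def by (simp add: norm_mult ennreal_mult)
  finally have nn: "(\<integral>\<^sup>+x. ennreal (norm (g x)) \<partial>(L2M \<Otimes>\<^sub>M L2M)) \<le> ennreal B" using bnd by simp
  show ?thesis
  proof (cases "integrable (L2M \<Otimes>\<^sub>M L2M) g")
    case True
    have "norm (J f1 f2 f3) \<le> integral\<^sup>L (L2M \<Otimes>\<^sub>M L2M) (\<lambda>x. norm (g x))"
      unfolding J by (rule integral_norm_bound)
    also have "ennreal (integral\<^sup>L (L2M \<Otimes>\<^sub>M L2M) (\<lambda>x. norm (g x))) = (\<integral>\<^sup>+x. ennreal (norm (g x)) \<partial>(L2M \<Otimes>\<^sub>M L2M))"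
      by (rule nn_integral_eq_integral[symmetric]) (use True in auto)
    then have "integral\<^sup>L (L2M \<Otimes>\<^sub>M L2M) (\<lambda>x. norm (g x)) \<le> B"
      using nn B by (metis ennreal_le_iff integral_nonneg_AE AE_I2 norm_ge_zero)
    finally show ?thesis .
  next
    case False
    then show ?thesis unfolding J using B by (simp add: not_integrable_integral_eq)
  qed
qed

lemma NN_L2:
  fixes f :: "real \<times> real \<Rightarrow> complex"
  assumes "L2 f"
  shows "NN (\<lambda>r. ennreal (norm (f r))) = ennreal ((L2norm f)^2)"
proof -
  have m: "f \<in> borel_measurable lborel" and i: "integrable lborel (\<lambda>x. (norm (f x))\<^sup>2)"
    using assms by (auto simp: L2_def)
  have "NN (\<lambda>r. ennreal (norm (f r))) = (\<integral>\<^sup>+x. ennreal ((norm (f x))\<^sup>2) \<partial>lborel)"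
    unfolding NN_def lborel_prod by (simp add: ennreal_power)
  also have "\<dots> = ennreal (\<integral>x. (norm (f x))\<^sup>2 \<partial>lborel)"
    by (rule nn_integral_eq_integral[OF i]) simp
  also have "(\<integral>x. (norm (f x))\<^sup>2 \<partial>lborel) = (L2norm f)^2"
    unfolding L2norm_def by (simp add: integral_nonneg_AE)
  finally show ?thesis .
qed

lemma L2_meas: "L2 f \<Longrightarrow> f \<in> borel_measurable L2M"
  by (simp add: L2_def lborel_prod)

lemma sqrt_step:
  fixes I :: ennreal
  assumes "I^2 \<le> ennreal K * (ennreal (a^2) * ennreal (b^2) * ennreal (c^2))"
    and "0 \<le> K" "0 \<le> a" "0 \<le> b" "0 \<le> c"
  shows "I \<le> ennreal (sqrt K * a * b * c)"
proof -
  define X where "X = sqrt K * a * b * c"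
  have X0: "0 \<le> X" using assms by (simp add: X_def)
  have "ennreal K * (ennreal (a^2) * ennreal (b^2) * ennreal (c^2)) = ennreal (X^2)"
    using assms by (simp add: X_def ennreal_mult[symmetric] power_mult_distrib)
  with assms(1) have h: "I^2 \<le> ennreal (X^2)" by simp
  have "I \<le> ennreal X"
  proof (cases I)
    case (real i)
    then have "ennreal (i^2) \<le> ennreal (X^2)" using h by (simp add: ennreal_power)
    then have "i^2 \<le> X^2" by (simp add: ennreal_le_iff)
    then have "i \<le> X" using X0 by (rule power2_le_imp_le)
    then show ?thesis using real by simp
  next
    case top
    then show ?thesis using h by (simp add: top_unique)
  qed
  then show ?thesis by (simp add: X_def)
qed



abbreviation PERMS :: "(nat \<times> nat \<times> nat) set" where
  "PERMS \<equiv> {(1,2,3),(2,1,3),(1,3,2),(3,1,2),(2,3,1),(3,2,1)}"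

lemma sqrt2p: "sqrt ((2::real) powr a) = 2 powr (a/2)"
  by (simp add: powr_half_sqrt_powr)

lemma min2p: "min ((2::real) powr a) (2 powr b) = 2 powr (min a b)"
  by (cases "a \<le> b") (auto simp: min_def)

lemma Idy_Supp:
  assumes "x \<in> Idy k \<times> Itil j"
  shows "x \<in> Supp (2 powr real_of_int k) (2 powr real j)"
proof -
  have e1: "(2::real) powr (real_of_int k - 1) = 2 powr real_of_int k / 2"
    by (simp add: powr_diff)
  have e2: "(2::real) powr (real_of_int k + 1) = 2 * 2 powr real_of_int k"
    by (simp add: powr_add)
  have e3: "(2::real) powr (real j + 1) = 2 * 2 powr real j"
    by (simp add: powr_add)
  have a: "2 powr real_of_int k / 2 \<le> \<bar>fst x\<bar> \<and> \<bar>fst x\<bar> \<le> 2 * 2 powr real_of_int k"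
    using assms by (auto simp: Idy_def e1 e2 mem_Times_iff)
  have b: "\<bar>snd x\<bar> \<le> 2 * 2 powr real j"
  proof (cases "j = 0")
    case True
    then show ?thesis using assms by (auto simp: Itil_def mem_Times_iff abs_le_iff)
  next
    case False
    then show ?thesis using assms by (auto simp: Itil_def Idy_def e3 mem_Times_iff)
  qed
  show ?thesis using a b by (simp add: Supp_def)
qed

lemma choose2:
  assumes "ia \<in> {1,2,3::nat}" "ib \<in> {1,2,3::nat}"
  shows "\<exists>a b c. (a,b,c) \<in> PERMS \<and> ia \<in> {a,b} \<and> ib \<in> {a,b}"
proof -
  consider "ia \<in> {1,2} \<and> ib \<in> {1,2}" | "ia \<in> {1,3} \<and> ib \<in> {1,3}" | "ia \<in> {2,3} \<and> ib \<in> {2,3}"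
    using assms by auto
  then show ?thesis
  proof cases
    case 1 then show ?thesis by (intro exI[of _ 1] exI[of _ 2] exI[of _ 3]) auto
  next
    case 2 then show ?thesis by (intro exI[of _ 1] exI[of _ 3] exI[of _ 2]) auto
  next
    case 3 then show ?thesis by (intro exI[of _ 2] exI[of _ 3] exI[of _ 1]) auto
  qed
qed

lemma argmin3:
  fixes x :: "nat \<Rightarrow> real"
  shows "\<exists>i\<in>{1,2,3}. x i = min (x 1) (min (x 2) (x 3))"
  by (simp add: min_def)

lemma choose_min:
  fixes x y :: "nat \<Rightarrow> real"
  shows "\<exists>a b c. (a,b,c) \<in> PERMS \<and> min (x a) (x b) \<le> min (x 1) (min (x 2) (x 3))
     \<and> min (y a) (y b) \<le> min (y 1) (min (y 2) (y 3))"
proof -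
  obtain ia where ia: "ia \<in> {1,2,3}" "x ia = min (x 1) (min (x 2) (x 3))" using argmin3 by blast
  obtain ib where ib: "ib \<in> {1,2,3}" "y ib = min (y 1) (min (y 2) (y 3))" using argmin3 by blast
  obtain a b c where abc: "(a,b,c) \<in> PERMS" "ia \<in> {a,b}" "ib \<in> {a,b}" using choose2[OF ia(1) ib(1)] by blast
  have "min (x a) (x b) \<le> x ia" using abc(2) by auto
  moreover have "min (y a) (y b) \<le> y ib" using abc(3) by auto
  ultimately show ?thesis using abc(1) ia ib by auto
qed

lemma choose_sorted:
  fixes y :: "nat \<Rightarrow> real"
  shows "\<exists>a b c. (a,b,c) \<in> PERMS \<and> y a \<le> y b \<and> y b \<le> y c"
proof -
  consider "y 1 \<le> y 2" "y 2 \<le> y 3" | "y 2 \<le> y 1" "y 1 \<le> y 3" | "y 1 \<le> y 3" "y 3 \<le> y 2"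
    | "y 3 \<le> y 1" "y 1 \<le> y 2" | "y 2 \<le> y 3" "y 3 \<le> y 1" | "y 3 \<le> y 2" "y 2 \<le> y 1"
    by linarith
  then show ?thesis
  proof cases
    case 1 then show ?thesis by (intro exI[of _ 1] exI[of _ 2] exI[of _ 3]) auto
  next
    case 2 then show ?thesis by (intro exI[of _ 2] exI[of _ 1] exI[of _ 3]) auto
  next
    case 3 then show ?thesis by (intro exI[of _ 1] exI[of _ 3] exI[of _ 2]) auto
  next
    case 4 then show ?thesis by (intro exI[of _ 3] exI[of _ 1] exI[of _ 2]) auto
  next
    case 5 then show ?thesis by (intro exI[of _ 2] exI[of _ 3] exI[of _ 1]) auto
  next
    case 6 then show ?thesis by (intro exI[of _ 3] exI[of _ 2] exI[of _ 1]) auto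
  qed
qed

lemma sorted_min_med:
  fixes y :: "nat \<Rightarrow> real"
  assumes "(a,b,c) \<in> PERMS" "y a \<le> y b" "y b \<le> y c"
  shows "min (y 1) (min (y 2) (y 3)) = y a" "med (y 1) (y 2) (y 3) = y b"
  using assms by (auto simp: med_def min_def max_def)

lemma perm_mem: "(a,b,c) \<in> PERMS \<Longrightarrow> a \<in> {1,2,3} \<and> b \<in> {1,2,3} \<and> c \<in> {1,2,3}"
  by auto

lemma sep_from_k:
  fixes k :: "nat \<Rightarrow> int"
  assumes "max (k 1) (max (k 2) (k 3)) \<ge> min (k 1) (min (k 2) (k 3)) + 5"
  shows "sepc (2 powr real_of_int (k 1)) (2 powr real_of_int (k 2)) (2 powr real_of_int (k 3))"
proof -
  have "\<exists>a\<in>{1,2,3::nat}. \<exists>b\<in>{1,2,3::nat}. k a + 5 \<le> k b"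
    using assms by (auto simp: max_def min_def split: if_splits)
  then obtain a b where ab: "a \<in> {1,2,3}" "b \<in> {1,2,3}" "k a + 5 \<le> k b" by blast
  have "32 * (2::real) powr real_of_int (k a) = 2 powr (real_of_int (k a) + 5)"
    by (simp add: powr_add)
  also have "\<dots> \<le> 2 powr real_of_int (k b)"
    using ab(3) by simp
  finally have "32 * (2::real) powr real_of_int (k a) \<le> 2 powr real_of_int (k b)" .
  then show ?thesis using ab unfolding sepc_def by auto
qed



lemma L2norm_nonneg: "0 \<le> L2norm f"
  unfolding L2norm_def by (simp add: integral_nonneg_AE)

lemma sqrt_le_aux:
  fixes K c e :: real
  assumes "0 \<le> K" "K \<le> c * 2 powr e" "0 \<le> c"
  shows "sqrt K \<le> sqrt c * 2 powr (e/2)"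
proof -
  have "sqrt K \<le> sqrt (c * 2 powr e)" using assms by simp
  also have "\<dots> = sqrt c * 2 powr (e/2)" by (simp add: real_sqrt_mult sqrt2p)
  finally show ?thesis .
qed

theorem lemma6p1:
  shows "\<exists>C::real. \<forall>(k :: nat \<Rightarrow> int) (j :: nat \<Rightarrow> nat) (f :: nat \<Rightarrow> real \<times> real \<Rightarrow> complex).
    (\<forall>i\<in>{1,2,3}. L2 (f i) \<and> (\<forall>x. x \<notin> Idy (k i) \<times> Itil (j i) \<longrightarrow> f i x = 0)) \<longrightarrow>
    (norm (J (f 1) (f 2) (f 3)) \<le> C * 2 powr (real_of_int (min (k 1) (min (k 2) (k 3))) / 2)
        * 2 powr (real (min (j 1) (min (j 2) (j 3))) / 2) * (\<Prod>i\<in>{1,2,3}. L2norm (f i))) \<and>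
    (max (k 1) (max (k 2) (k 3)) \<ge> min (k 1) (min (k 2) (k 3)) + 5 \<longrightarrow>
      (\<forall>i\<in>{1,2,3}. norm (J (f 1) (f 2) (f 3)) \<le>
         C * 2 powr (real (j 1 + j 2 + j 3) / 2) * 2 powr (- (real (j i) + real_of_int (k i)) / 2)
         * (\<Prod>l\<in>{1,2,3}. L2norm (f l)))) \<and>
    (norm (J (f 1) (f 2) (f 3)) \<le>
       C * 2 powr (real (min (j 1) (min (j 2) (j 3))) / 2 + med (real (j 1)) (real (j 2)) (real (j 3)) / 4)
       * (\<Prod>i\<in>{1,2,3}. L2norm (f i)))"
proof (intro exI[of _ 20] allI impI conjI)
  fix k :: "nat \<Rightarrow> int" and j :: "nat \<Rightarrow> nat" and f :: "nat \<Rightarrow> real \<times> real \<Rightarrow> complex"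
  assume H: "\<forall>i\<in>{1,2,3}. L2 (f i) \<and> (\<forall>x. x \<notin> Idy (k i) \<times> Itil (j i) \<longrightarrow> f i x = 0)"
  define F where "F i = (\<lambda>r. ennreal (norm (f i r)))" for i
  define P where "P i = (2::real) powr real_of_int (k i)" for i
  define Q where "Q i = (2::real) powr real (j i)" for i
  define n where "n i = L2norm (f i)" for i
  define I where "I = Ient (F 1) (F 2) (F 3)"
  define NP where "NP = NN (F 1) * NN (F 2) * NN (F 3)"
  have L2i: "L2 (f i)" if "i \<in> {1,2,3}" for i using H that by auto
  have fm: "f i \<in> borel_measurable L2M" if "i \<in> {1,2,3}" for i using L2_meas[OF L2i[OF that]] .
  have goodi: "good (F i) (P i) (Q i)" if i: "i \<in> {1,2,3}" for i
  proof -
    have [measurable]: "f i \<in> borel_measurable L2M" using fm[OF i] .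
    have "F i \<in> borel_measurable L2M" unfolding F_def by measurable
    moreover have "F i r = 0" if "r \<notin> Supp (P i) (Q i)" for r
    proof -
      have "r \<notin> Idy (k i) \<times> Itil (j i)" using that Idy_Supp unfolding P_def Q_def by blast
      moreover have "\<forall>x. x \<notin> Idy (k i) \<times> Itil (j i) \<longrightarrow> f i x = 0" using H i by blast
      ultimately have "f i r = 0" by blast
      then show ?thesis by (simp add: F_def)
    qed
    ultimately show ?thesis by (auto simp: good_def)
  qed
  have Ppos: "0 < P i" for i by (simp add: P_def)
  have Qpos: "0 < Q i" for i by (simp add: Q_def)
  have n0: "0 \<le> n i" for i by (simp add: n_def L2norm_nonneg)
  have NNi: "NN (F i) = ennreal ((n i)^2)" if "i \<in> {1,2,3}" for i
    unfolding F_def n_def by (rule NN_L2[OF L2i[OF that]])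
  have prod: "(\<Prod>i\<in>{1,2,3}. L2norm (f i)) = n 1 * n 2 * n 3" by (simp add: n_def)
  have key: "norm (J (f 1) (f 2) (f 3)) \<le> 20 * E * (\<Prod>i\<in>{1,2,3}. L2norm (f i))"
    if KI: "I^2 \<le> ennreal K * NP" and K0: "0 \<le> K" and KE: "sqrt K \<le> 20 * E" for K E
  proof -
    have "I^2 \<le> ennreal K * (ennreal ((n 1)^2) * ennreal ((n 2)^2) * ennreal ((n 3)^2))"
      using KI by (simp add: NP_def NNi)
    then have "I \<le> ennreal (sqrt K * n 1 * n 2 * n 3)"
      by (rule sqrt_step) (use K0 n0 in auto)
    then have "norm (J (f 1) (f 2) (f 3)) \<le> sqrt K * n 1 * n 2 * n 3"
      unfolding I_def F_def by (intro J_conv fm) (use K0 n0 in auto)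
    also have "\<dots> = sqrt K * (n 1 * n 2 * n 3)" by (simp add: mult_ac)
    also have "\<dots> \<le> 20 * E * (n 1 * n 2 * n 3)"
      using KE n0 by (intro mult_right_mono) auto
    finally show ?thesis by (simp add: n_def mult.assoc)
  qed
  have g123: "good (F 1) (P 1) (Q 1)" "good (F 2) (P 2) (Q 2)" "good (F 3) (P 3) (Q 3)"
    by (rule goodi; simp)+
  note MA = MASTER[of F P Q, OF g123 Ppos Ppos Ppos Qpos Qpos Qpos, folded I_def NP_def]
  define km where "km = real_of_int (min (k 1) (min (k 2) (k 3)))"
  define jm where "jm = real (min (j 1) (min (j 2) (j 3)))"
  have Pm: "min (P 1) (min (P 2) (P 3)) = 2 powr km"
    by (simp add: P_def km_def min2p of_int_min)
  have Qm: "min (Q 1) (min (Q 2) (Q 3)) = 2 powr jm"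
    by (simp add: Q_def jm_def min2p of_nat_min)
  have partA: "\<exists>K. 0 \<le> K \<and> I^2 \<le> ennreal K * NP \<and> K \<le> 16 * 2 powr km * 2 powr jm"
  proof -
    obtain a b c where abc: "(a,b,c) \<in> PERMS" "min (P a) (P b) \<le> min (P 1) (min (P 2) (P 3))"
      "min (Q a) (Q b) \<le> min (Q 1) (min (Q 2) (Q 3))"
      using choose_min[of P Q] by blast
    have h1: "min (P a) (P b) \<le> 2 powr km" using abc(2) Pm by (rule ord_le_eq_trans)
    have h2: "min (Q a) (Q b) \<le> 2 powr jm" using abc(3) Qm by (rule ord_le_eq_trans)
    have "BA (P a) (P b) (Q a) (Q b) \<le> 16 * 2 powr km * 2 powr jm"
    proof -
      have "min (P a) (P b) * min (Q a) (Q b) \<le> 2 powr km * 2 powr jm"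
        by (rule mult_mono[OF h1 h2]) (use Qpos[of a] Qpos[of b] in auto)
      then show ?thesis unfolding BA_def by simp
    qed
    moreover have "0 \<le> BA (P a) (P b) (Q a) (Q b)" unfolding BA_def
      using Ppos[of a] Ppos[of b] Qpos[of a] Qpos[of b] by simp
    ultimately show ?thesis using MA(1)[OF abc(1)] by blast
  qed
  show "norm (J (f 1) (f 2) (f 3)) \<le> 20 * 2 powr (real_of_int (min (k 1) (min (k 2) (k 3))) / 2)
        * 2 powr (real (min (j 1) (min (j 2) (j 3))) / 2) * (\<Prod>i\<in>{1,2,3}. L2norm (f i))"
  proof -
    obtain K where K: "0 \<le> K" "I^2 \<le> ennreal K * NP" "K \<le> 16 * 2 powr km * 2 powr jm"
      using partA by blast
    have "K \<le> 16 * 2 powr (km + jm)" using K(3) by (simp add: powr_add mult.assoc)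
    then have "sqrt K \<le> sqrt 16 * 2 powr ((km + jm)/2)" by (rule sqrt_le_aux[OF K(1)]) simp
    also have "\<dots> \<le> 20 * (2 powr (km/2) * 2 powr (jm/2))"
      by (simp add: powr_add[symmetric] add_divide_distrib)
    finally have "norm (J (f 1) (f 2) (f 3)) \<le> 20 * (2 powr (km/2) * 2 powr (jm/2)) * (\<Prod>i\<in>{1,2,3}. L2norm (f i))"
      by (rule key[OF K(2) K(1)])
    then show ?thesis by (simp add: km_def jm_def mult.assoc)
  qed
  show "\<forall>i\<in>{1,2,3}. norm (J (f 1) (f 2) (f 3)) \<le>
         20 * 2 powr (real (j 1 + j 2 + j 3) / 2) * 2 powr (- (real (j i) + real_of_int (k i)) / 2)
         * (\<Prod>l\<in>{1,2,3}. L2norm (f l))"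
    if sep: "max (k 1) (max (k 2) (k 3)) \<ge> min (k 1) (min (k 2) (k 3)) + 5"
  proof
    fix i :: nat assume i: "i \<in> {1,2,3}"
    have sc: "sepc (P 1) (P 2) (P 3)" unfolding P_def by (rule sep_from_k[OF sep])
    obtain a b where ab: "(a,b,i) \<in> PERMS"
    proof -
      from i consider "i = 1" | "i = 2" | "i = 3" by auto
      then show ?thesis
      proof cases
        case 1 then show ?thesis using that[of 2 3] by auto
      next
        case 2 then show ?thesis using that[of 1 3] by auto
      next
        case 3 then show ?thesis using that[of 1 2] by auto
      qed
    qed
    define e where "e = real (j a) + real (j b) - real_of_int (k i)"
    have sumj: "real (j 1 + j 2 + j 3) = real (j a) + real (j b) + real (j i)"
      using ab by auto
    have KB: "BB (Q a) (Q b) (P i) = 288 * 2 powr e"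
      unfolding BB_def Q_def P_def e_def by (simp add: powr_add powr_diff field_simps)
    have "sqrt (BB (Q a) (Q b) (P i)) \<le> sqrt 288 * 2 powr (e/2)"
      by (rule sqrt_le_aux) (use KB in auto)
    also have "sqrt 288 \<le> (17::real)"
      by (rule real_le_lsqrt) auto
    then have "sqrt 288 * 2 powr (e/2) \<le> 20 * 2 powr (e/2)" by simp
    also have "2 powr (e/2) = 2 powr (real (j 1 + j 2 + j 3) / 2) * 2 powr (- (real (j i) + real_of_int (k i)) / 2)"
      unfolding sumj e_def by (simp add: powr_add[symmetric] field_simps)
    finally have sq: "sqrt (BB (Q a) (Q b) (P i)) \<le> 20 * (2 powr (real (j 1 + j 2 + j 3) / 2) * 2 powr (- (real (j i) + real_of_int (k i)) / 2))"
      by simp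
    have K0: "0 \<le> BB (Q a) (Q b) (P i)" using KB by simp
    have "norm (J (f 1) (f 2) (f 3)) \<le> 20 * (2 powr (real (j 1 + j 2 + j 3) / 2) * 2 powr (- (real (j i) + real_of_int (k i)) / 2)) * (\<Prod>i\<in>{1,2,3}. L2norm (f i))"
      by (rule key[OF MA(2)[OF ab sc] K0 sq])
    then
    show "norm (J (f 1) (f 2) (f 3)) \<le> 20 * 2 powr (real (j 1 + j 2 + j 3) / 2) * 2 powr (- (real (j i) + real_of_int (k i)) / 2)
         * (\<Prod>l\<in>{1,2,3}. L2norm (f l))" by (simp add: mult.assoc)
  qed
  show "norm (J (f 1) (f 2) (f 3)) \<le>
       20 * 2 powr (real (min (j 1) (min (j 2) (j 3))) / 2 + med (real (j 1)) (real (j 2)) (real (j 3)) / 4)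
       * (\<Prod>i\<in>{1,2,3}. L2norm (f i))"
  proof -
    obtain a b c where abc: "(a,b,c) \<in> PERMS" "real (j a) \<le> real (j b)" "real (j b) \<le> real (j c)"
      using choose_sorted[of "\<lambda>i. real (j i)"] by blast
    note mm = sorted_min_med[of a b c "\<lambda>i. real (j i)", OF abc]
    have jma: "jm = real (j a)" using mm(1) by (simp add: jm_def of_nat_min)
    have Qma: "2 powr jm = Q a" by (simp add: jma Q_def)
    have sQb: "sqrt (Q b) = 2 powr (real (j b) / 2)" by (simp add: Q_def sqrt2p)
    have sQb0: "0 < sqrt (Q b)" using Qpos by simp
    have "\<exists>K. 0 \<le> K \<and> I^2 \<le> ennreal K * NP \<and> K \<le> 56 * Q a * sqrt (Q b)"
    proof (cases "2 powr km \<le> sqrt (Q b)")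
      case True
      obtain K where K: "0 \<le> K" "I^2 \<le> ennreal K * NP" "K \<le> 16 * 2 powr km * 2 powr jm"
        using partA by blast
      have "16 * 2 powr km * 2 powr jm \<le> 16 * sqrt (Q b) * Q a"
        using True Qpos[of a] unfolding Qma by (intro mult_right_mono) auto
      then show ?thesis using K Qpos by (intro exI[of _ K]) (auto simp: mult_ac)
    next
      case False
      have Pc: "sqrt (Q b) \<le> P c"
      proof -
        have "min (P 1) (min (P 2) (P 3)) \<le> P c" using abc(1) by auto
        then show ?thesis using False Pm by simp
      qed
      have t1: "Q b / P c \<le> sqrt (Q b)"
      proof -
        have "Q b / P c \<le> Q b / sqrt (Q b)" using Pc sQb0 Qpos[of b] Ppos[of c] by (intro divide_left_mono) auto
        also have "Q b / sqrt (Q b) = sqrt (Q b)" by (rule real_div_sqrt) (use Qpos[of b] in simp)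
        finally show ?thesis .
      qed
      have t2: "sqrt (2 * Q b) \<le> 3/2 * sqrt (Q b)"
      proof -
        have "sqrt 2 \<le> (3/2::real)" by (rule real_le_lsqrt) (auto simp: power2_eq_square)
        then show ?thesis using sQb0 by (simp add: real_sqrt_mult)
      qed
      have "BC (Q a) (Q b) (P c) \<le> 4 * Q a * (8 * sqrt (Q b) + 4 * (3/2 * sqrt (Q b)))"
        unfolding BC_def using t1 t2 Qpos[of a] by (intro mult_left_mono add_mono) auto
      also have "\<dots> = 56 * Q a * sqrt (Q b)" by simp
      finally have "BC (Q a) (Q b) (P c) \<le> 56 * Q a * sqrt (Q b)" .
      moreover have "0 \<le> BC (Q a) (Q b) (P c)" unfolding BC_def using Qpos[of a] Qpos[of b] Ppos[of c] by simp
      ultimately show ?thesis using MA(3)[OF abc(1)] by blast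
    qed
    then obtain K where K: "0 \<le> K" "I^2 \<le> ennreal K * NP" "K \<le> 56 * Q a * sqrt (Q b)" by blast
    have "K \<le> 56 * 2 powr (real (j a) + real (j b) / 2)"
      using K(3) by (simp add: Q_def sqrt2p powr_add mult.assoc)
    then have "sqrt K \<le> sqrt 56 * 2 powr ((real (j a) + real (j b) / 2)/2)" by (rule sqrt_le_aux[OF K(1)]) simp
    also have "sqrt 56 \<le> (8::real)" by (rule real_le_lsqrt) auto
    then have "sqrt 56 * 2 powr ((real (j a) + real (j b) / 2)/2) \<le> 20 * 2 powr ((real (j a) + real (j b) / 2)/2)"
      by simp
    also have "(real (j a) + real (j b) / 2)/2 = real (min (j 1) (min (j 2) (j 3))) / 2 + med (real (j 1)) (real (j 2)) (real (j 3)) / 4"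
      using mm jma by (simp add: jm_def field_simps)
    finally show ?thesis by (rule key[OF K(2) K(1)])
  qed
qed


end
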